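(* Let $(n_k)_{k\ge0}$ be a strictly increasing sequence of positive integers with $n_0=1$ such that for every $\varepsilon>0$ there exists $\lambda\in\mathbb{T}\setminus\{1\}$ with $\sup_{k\ge0}|\lambda^{n_k}-1|\le\varepsilon$. Then for every $\delta>0$ there exists a bounded linear operator $T$ on the Hilbert space $\ell_2(\mathbb{N})$ which has perfectly spanning unimodular eigenvectors and satisfies $\sup_{k\ge0}\|T^{n_k}\|\le 1+\delta$. In particular, $\sigma_p(T)\cap\mathbb{T}$ is uncountable.
   Context: $\mathbb{T}$ is the unit circle in $\mathbb{C}$; $\sigma_p(T)$ is the set of eigenvalues of $T$. A bounded operator $T$ on a complex separable Hilbert space $H$ has perfectly spanning unimodular eigenvectors if there exists a continuous (atomless) Borel probability measure $\sigma$ on $\mathbb{T}$ such that for every Borel set $B\subseteq\mathbb{T}$ with $\sigma(B)=1$, the closed linear span of $\bigcup_{\lambda\in B}\ker(T-\lambda I)$ equals $H$. *)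

theory Defs
  imports "HOL-Probability.Probability"
begin

definition ell2 :: "(nat \<Rightarrow> complex) set" where
  "ell2 = {x. summable (\<lambda>i. (cmod (x i))\<^sup>2)}"

definition ell2_norm :: "(nat \<Rightarrow> complex) \<Rightarrow> real" where
  "ell2_norm x = sqrt (\<Sum>i. (cmod (x i))\<^sup>2)"

definition bounded_op_ell2 :: "((nat \<Rightarrow> complex) \<Rightarrow> (nat \<Rightarrow> complex)) \<Rightarrow> bool" where
  "bounded_op_ell2 T \<longleftrightarrow>
     (\<forall>x\<in>ell2. T x \<in> ell2) \<and>
     (\<forall>x\<in>ell2. \<forall>y\<in>ell2. T (\<lambda>i. x i + y i) = (\<lambda>i. T x i + T y i)) \<and>
     (\<forall>x\<in>ell2. \<forall>c::complex. T (\<lambda>i. c * x i) = (\<lambda>i. c * T x i)) \<and>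
     (\<exists>C. \<forall>x\<in>ell2. ell2_norm (T x) \<le> C * ell2_norm x)"

definition op_norm_ell2 :: "((nat \<Rightarrow> complex) \<Rightarrow> (nat \<Rightarrow> complex)) \<Rightarrow> real" where
  "op_norm_ell2 T = Sup {ell2_norm (T x) | x. x \<in> ell2 \<and> ell2_norm x \<le> 1}"

definition eigenspace_ell2 :: "((nat \<Rightarrow> complex) \<Rightarrow> (nat \<Rightarrow> complex)) \<Rightarrow> complex \<Rightarrow> (nat \<Rightarrow> complex) set" where
  "eigenspace_ell2 T l = {x \<in> ell2. T x = (\<lambda>i. l * x i)}"

definition point_spectrum_ell2 :: "((nat \<Rightarrow> complex) \<Rightarrow> (nat \<Rightarrow> complex)) \<Rightarrow> complex set" where
  "point_spectrum_ell2 T = {l. \<exists>x\<in>eigenspace_ell2 T l. x \<noteq> (\<lambda>i. 0)}"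

definition cspan_ell2 :: "(nat \<Rightarrow> complex) set \<Rightarrow> (nat \<Rightarrow> complex) set" where
  "cspan_ell2 S = {(\<lambda>i. \<Sum>v\<in>F. c v * v i) | F c. finite F \<and> F \<subseteq> S}"

definition closed_span_ell2 :: "(nat \<Rightarrow> complex) set \<Rightarrow> (nat \<Rightarrow> complex) set" where
  "closed_span_ell2 S =
     {x \<in> ell2. \<forall>e>0. \<exists>y\<in>cspan_ell2 S. ell2_norm (\<lambda>i. x i - y i) < e}"

definition perfectly_spanning_unimodular ::
  "((nat \<Rightarrow> complex) \<Rightarrow> (nat \<Rightarrow> complex)) \<Rightarrow> bool" where
  "perfectly_spanning_unimodular T \<longleftrightarrow>
     (\<exists>\<sigma> :: complex measure.
        sets \<sigma> = sets borel \<and> prob_space \<sigma> \<and>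
        emeasure \<sigma> (sphere 0 1) = 1 \<and>
        (\<forall>z. emeasure \<sigma> {z} = 0) \<and>
        (\<forall>B. B \<in> sets borel \<longrightarrow> B \<subseteq> sphere 0 1 \<longrightarrow> emeasure \<sigma> B = 1 \<longrightarrow>
             closed_span_ell2 (\<Union>l\<in>B. eigenspace_ell2 T l) = ell2))"

end

theory Submission
  imports Defs "HOL-Library.Nat_Bijection"
begin


lemma bounded_summable_nonneg:
  fixes f :: "nat \<Rightarrow> real"
  assumes "\<And>n. 0 \<le> f n" "\<And>n. (\<Sum>i<n. f i) \<le> B"
  shows "summable f \<and> suminf f \<le> B"
  using summableI_nonneg_bounded[OF assms] suminf_le_const assms by blast

lemma ell2_norm_nonneg: "x \<in> ell2 \<Longrightarrow> 0 \<le> ell2_norm x"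
  by (auto simp: ell2_norm_def ell2_def intro!: suminf_nonneg)

lemma ell2_norm_sq: "x \<in> ell2 \<Longrightarrow> (ell2_norm x)^2 = (\<Sum>i. (cmod (x i))^2)"
  by (auto simp: ell2_norm_def ell2_def intro!: suminf_nonneg)

lemma ell2_partial_le: "x \<in> ell2 \<Longrightarrow> (\<Sum>i\<in>I. (cmod (x i))^2) \<le> (ell2_norm x)^2" if "finite I"
  using that by (auto simp: ell2_norm_sq ell2_def intro!: sum_le_suminf)

lemma ell2_normI:
  assumes "\<And>n. (\<Sum>i<n. (cmod (x i))^2) \<le> B^2" "0 \<le> B"
  shows "x \<in> ell2 \<and> ell2_norm x \<le> B"
proof -
  have *: "summable (\<lambda>i. (cmod (x i))^2) \<and> (\<Sum>i. (cmod (x i))^2) \<le> B^2"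
    by (rule bounded_summable_nonneg) (use assms in auto)
  then have "ell2_norm x \<le> sqrt (B^2)" unfolding ell2_norm_def by (intro real_sqrt_le_mono) auto
  with * assms show ?thesis by (simp add: ell2_def)
qed

lemma ell2_CS:
  assumes "x \<in> ell2" "y \<in> ell2"
  shows "summable (\<lambda>i. cmod (x i) * cmod (y i)) \<and>
         (\<Sum>i. cmod (x i) * cmod (y i)) \<le> ell2_norm x * ell2_norm y"
proof (rule bounded_summable_nonneg)
  fix n
  have "(\<Sum>i<n. cmod (x i) * cmod (y i)) = (\<Sum>i<n. \<bar>cmod (x i)\<bar> * \<bar>cmod (y i)\<bar>)" by simp
  also have "\<dots> \<le> L2_set (\<lambda>i. cmod (x i)) {..<n} * L2_set (\<lambda>i. cmod (y i)) {..<n}"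
    by (rule L2_set_mult_ineq)
  also have "\<dots> \<le> ell2_norm x * ell2_norm y"
  proof (rule mult_mono)
    show "L2_set (\<lambda>i. cmod (x i)) {..<n} \<le> ell2_norm x"
      using ell2_partial_le[OF _ assms(1), of "{..<n}"] ell2_norm_nonneg[OF assms(1)]
      unfolding L2_set_def by (simp add: real_le_lsqrt)
    show "L2_set (\<lambda>i. cmod (y i)) {..<n} \<le> ell2_norm y"
      using ell2_partial_le[OF _ assms(2), of "{..<n}"] ell2_norm_nonneg[OF assms(2)]
      unfolding L2_set_def by (simp add: real_le_lsqrt)
  qed (use assms in \<open>auto simp: ell2_norm_nonneg\<close>)
  finally show "(\<Sum>i<n. cmod (x i) * cmod (y i)) \<le> ell2_norm x * ell2_norm y" .
qed auto

lemma ell2_add: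
  assumes "x \<in> ell2" "y \<in> ell2"
  shows "(\<lambda>i. x i + y i) \<in> ell2 \<and> ell2_norm (\<lambda>i. x i + y i) \<le> ell2_norm x + ell2_norm y"
proof (rule ell2_normI)
  fix n
  have CS: "summable (\<lambda>i. cmod (x i) * cmod (y i))" "(\<Sum>i. cmod (x i) * cmod (y i)) \<le> ell2_norm x * ell2_norm y"
    using ell2_CS[OF assms] by auto
  have "(\<Sum>i<n. (cmod (x i + y i))^2) \<le> (\<Sum>i<n. (cmod (x i) + cmod (y i))^2)"
    by (intro sum_mono power_mono norm_triangle_ineq) auto
  also have "\<dots> = (\<Sum>i<n. (cmod (x i))^2) + 2 * (\<Sum>i<n. cmod (x i) * cmod (y i)) + (\<Sum>i<n. (cmod (y i))^2)"
    by (simp add: power2_sum sum.distrib sum_distrib_left mult.assoc)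
  also have "\<dots> \<le> (ell2_norm x)^2 + 2 * (ell2_norm x * ell2_norm y) + (ell2_norm y)^2"
    using ell2_partial_le[OF _ assms(1), of "{..<n}"] ell2_partial_le[OF _ assms(2), of "{..<n}"]
      sum_le_suminf[OF CS(1), of "{..<n}"] CS(2) by auto
  also have "\<dots> = (ell2_norm x + ell2_norm y)^2" by (simp add: power2_sum)
  finally show "(\<Sum>i<n. (cmod (x i + y i))^2) \<le> (ell2_norm x + ell2_norm y)^2" .
qed (use assms in \<open>auto simp: ell2_norm_nonneg\<close>)

lemma ell2_scale:
  assumes "x \<in> ell2"
  shows "(\<lambda>i. c * x i) \<in> ell2 \<and> ell2_norm (\<lambda>i. c * x i) = cmod c * ell2_norm x"
proof -
  have s: "summable (\<lambda>i. (cmod (x i))^2)" using assms by (simp add: ell2_def)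
  have "(\<lambda>i. (cmod (c * x i))^2) = (\<lambda>i. (cmod c)^2 * (cmod (x i))^2)"
    by (simp add: norm_mult power_mult_distrib)
  moreover have "summable (\<lambda>i. (cmod c)^2 * (cmod (x i))^2)" using s by (rule summable_mult)
  moreover have "sqrt (\<Sum>i. (cmod c)^2 * (cmod (x i))^2) = cmod c * ell2_norm x"
    using suminf_mult[OF s, of "(cmod c)^2"] by (simp add: ell2_norm_def real_sqrt_mult)
  ultimately show ?thesis by (simp add: ell2_def ell2_norm_def)
qed

lemma ell2_diff:
  assumes "x \<in> ell2" "y \<in> ell2"
  shows "(\<lambda>i. x i - y i) \<in> ell2"
  using ell2_add[OF assms(1) ell2_scale[OF assms(2), of "-1", THEN conjunct1]] by simp

lemma ell2_norm_eq0:
  assumes "x \<in> ell2" "ell2_norm x = 0" shows "x = (\<lambda>i. 0)"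
proof
  fix i
  have "(cmod (x i))^2 \<le> (ell2_norm x)^2"
    using ell2_partial_le[OF _ assms(1), of "{i}"] by simp
  then show "x i = 0" using assms(2) by simp
qed

lemma ell2_zero: "(\<lambda>i. 0) \<in> ell2" by (simp add: ell2_def)

lemma ell2_norm_zero: "ell2_norm (\<lambda>i. 0) = 0" by (simp add: ell2_norm_def)

lemma coord_le_norm: "x \<in> ell2 \<Longrightarrow> cmod (x i) \<le> ell2_norm x"
  using ell2_partial_le[of "{i}" x] ell2_norm_nonneg[of x] by (simp add: abs_le_square_iff)

lemma ell2_finite_support:
  assumes "\<And>i. i \<ge> N \<Longrightarrow> x i = 0" shows "x \<in> ell2"
proof -
  have "summable (\<lambda>i. (cmod (x i))^2)"
    by (rule summable_finite[of "{..<N}"]) (use assms in auto)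
  then show ?thesis by (simp add: ell2_def)
qed



abbreviation bits :: "nat \<Rightarrow> nat set" where "bits \<equiv> set_decode"

lemma codes_eq: "finite A \<Longrightarrow> {m. bits m \<subseteq> A} = set_encode ` Pow A"
proof (safe)
  fix m assume "finite A" "bits m \<subseteq> A"
  then show "m \<in> set_encode ` Pow A" by (intro image_eqI[of _ _ "bits m"]) auto
next
  fix S x assume "finite A" "S \<subseteq> A" "x \<in> bits (set_encode S)"
  then show "x \<in> A" using finite_subset[of S A] by auto
qed

lemma sum_codes:
  assumes "finite A"
  shows "(\<Sum>m | bits m \<subseteq> A. F (bits m)) = (\<Sum>S\<in>Pow A. F S)"
proof -
  have inj: "inj_on set_encode (Pow A)"
    using inj_on_set_encode by (rule inj_on_subset) (use assms finite_subset in auto)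
  have "(\<Sum>m | bits m \<subseteq> A. F (bits m)) = (\<Sum>m\<in>set_encode ` Pow A. F (bits m))"
    by (simp add: codes_eq assms)
  also have "\<dots> = (\<Sum>S\<in>Pow A. F (bits (set_encode S)))"
    by (rule sum.reindex[OF inj, unfolded comp_def])
  also have "\<dots> = (\<Sum>S\<in>Pow A. F S)"
  proof (intro sum.cong refl)
    fix S assume "S \<in> Pow A"
    then have "finite S" using assms finite_subset by auto
    then show "F (bits (set_encode S)) = F S" by simp
  qed
  finally show ?thesis .
qed

lemma finite_codes: "finite A \<Longrightarrow> finite {m. bits m \<subseteq> A}"
  by (simp add: codes_eq)

lemma sum_Pow_prod:
  fixes f :: "nat \<Rightarrow> 'a::comm_semiring_1"
  assumes "finite A" shows "(\<Sum>S\<in>Pow A. \<Prod>j\<in>S. f j) = (\<Prod>j\<in>A. 1 + f j)"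
  using prod_add[OF assms, of f "\<lambda>_. 1"] by (simp add: add.commute)

lemma bit_lt: "j \<in> bits m \<Longrightarrow> j < m"
proof -
  assume j: "j \<in> bits m"
  have "(2::nat)^j \<le> sum ((^) 2) (bits m)"
    using j by (intro member_le_sum) auto
  also have "\<dots> = m" using set_decode_inverse[of m] by (simp add: set_encode_def)
  finally show ?thesis using less_exp[of j] by linarith
qed

lemma bits_lessThan: "m < n \<Longrightarrow> bits m \<subseteq> {..<n}"
  using bit_lt by fastforce

definition Mx :: "(nat \<Rightarrow> complex) \<Rightarrow> (nat \<Rightarrow> complex) \<Rightarrow> nat \<Rightarrow> nat \<Rightarrow> complex" where
  "Mx g h i m = (if bits i \<subseteq> bits m then (\<Prod>j\<in>bits m - bits i. g j) * (\<Prod>j\<in>bits i. h j) else 0)"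

definition Top :: "(nat \<Rightarrow> complex) \<Rightarrow> (nat \<Rightarrow> complex) \<Rightarrow> (nat \<Rightarrow> complex) \<Rightarrow> (nat \<Rightarrow> complex)" where
  "Top g h x = (\<lambda>i. \<Sum>m. Mx g h i m * x m)"

definition Kb :: "(nat \<Rightarrow> complex) \<Rightarrow> real \<Rightarrow> bool" where
  "Kb g K \<longleftrightarrow> (\<forall>A. finite A \<longrightarrow> (\<Prod>j\<in>A. 1 + cmod (g j)) \<le> K)"

definition unim :: "(nat \<Rightarrow> complex) \<Rightarrow> bool" where
  "unim h \<longleftrightarrow> (\<forall>j. cmod (h j) = 1)"

lemma Kb_ge1: "Kb g K \<Longrightarrow> 1 \<le> K"
  unfolding Kb_def by (metis finite.emptyI prod.empty)

lemma cmod_Mx: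
  assumes "unim h"
  shows "cmod (Mx g h i m) = (if bits i \<subseteq> bits m then (\<Prod>j\<in>bits m - bits i. cmod (g j)) else 0)"
proof -
  have "cmod (prod h (bits i)) = 1" using assms by (simp add: unim_def prod_norm[symmetric])
  then show ?thesis by (simp add: Mx_def norm_mult prod_norm[symmetric])
qed

lemma Mx_zero: "\<not> bits i \<subseteq> bits m \<Longrightarrow> Mx g h i m = 0"
  by (simp add: Mx_def)

lemma row_bound:
  assumes "unim h" "Kb g K" "finite I"
  shows "(\<Sum>m\<in>I. cmod (Mx g h i m)) \<le> K"
proof -
  define A where "A = bits i \<union> (\<Union>m\<in>I. bits m)"
  have fA: "finite A" using assms(3) by (simp add: A_def)
  have "(\<Sum>m\<in>I. cmod (Mx g h i m)) \<le> (\<Sum>m | bits m \<subseteq> A. cmod (Mx g h i m))"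
    by (intro sum_mono2 finite_codes fA) (auto simp: A_def)
  also have "\<dots> = (\<Sum>S\<in>Pow A. if bits i \<subseteq> S then (\<Prod>j\<in>S - bits i. cmod (g j)) else 0)"
    using sum_codes[OF fA, of "\<lambda>S. if bits i \<subseteq> S then (\<Prod>j\<in>S - bits i. cmod (g j)) else 0"]
    by (simp add: cmod_Mx[OF assms(1)])
  also have "\<dots> = (\<Sum>S\<in>{S\<in>Pow A. bits i \<subseteq> S}. (\<Prod>j\<in>S - bits i. cmod (g j)))"
    by (simp add: sum.If_cases fA Int_def)
  also have "\<dots> = (\<Sum>R\<in>(\<lambda>S. S - bits i) ` {S\<in>Pow A. bits i \<subseteq> S}. (\<Prod>j\<in>R. cmod (g j)))"
  proof (rule sum.reindex[symmetric, unfolded comp_def])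
    show "inj_on (\<lambda>S. S - bits i) {S \<in> Pow A. bits i \<subseteq> S}"
      by (rule inj_onI) blast
  qed
  also have "\<dots> \<le> (\<Sum>R\<in>Pow A. (\<Prod>j\<in>R. cmod (g j)))"
    by (intro sum_mono2 prod_nonneg) (auto simp: fA)
  also have "\<dots> = (\<Prod>j\<in>A. 1 + cmod (g j))" by (rule sum_Pow_prod[OF fA])
  also have "\<dots> \<le> K" using assms(2) fA by (simp add: Kb_def)
  finally show ?thesis .
qed

lemma col_bound:
  assumes "unim h" "Kb g K" "finite I"
  shows "(\<Sum>i\<in>I. cmod (Mx g h i m)) \<le> K"
proof -
  define A where "A = bits m"
  have fA: "finite A" by (simp add: A_def)
  have "(\<Sum>i\<in>I. cmod (Mx g h i m)) = (\<Sum>i\<in>I \<inter> {i. bits i \<subseteq> A}. cmod (Mx g h i m))"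
    by (rule sum.mono_neutral_right) (auto simp: assms(3) Mx_zero A_def)
  also have "\<dots> \<le> (\<Sum>i | bits i \<subseteq> A. cmod (Mx g h i m))"
    by (intro sum_mono2 finite_codes fA) auto
  also have "\<dots> = (\<Sum>S\<in>Pow A. \<Prod>j\<in>A - S. cmod (g j))"
    using sum_codes[OF fA, of "\<lambda>S. \<Prod>j\<in>A - S. cmod (g j)"]
    by (simp add: cmod_Mx[OF assms(1)] A_def)
  also have "\<dots> = (\<Sum>Q\<in>Pow A. \<Prod>j\<in>Q. cmod (g j))"
    by (rule sum.reindex_bij_witness[of _ "\<lambda>Q. A - Q" "\<lambda>Q. A - Q"]) auto
  also have "\<dots> = (\<Prod>j\<in>A. 1 + cmod (g j))" by (rule sum_Pow_prod[OF fA])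
  also have "\<dots> \<le> K" using assms(2) fA by (simp add: Kb_def)
  finally show ?thesis .
qed


lemma row_summable:
  assumes "unim h" "Kb g K"
  shows "summable (\<lambda>m. cmod (Mx g h i m)) \<and> (\<Sum>m. cmod (Mx g h i m)) \<le> K"
  by (rule bounded_summable_nonneg) (use row_bound[OF assms] in auto)

lemma Mx_le: "unim h \<Longrightarrow> Kb g K \<Longrightarrow> cmod (Mx g h i m) \<le> K"
  using row_bound[of h g K "{m}" i] by simp

lemma coord_est:
  assumes "unim h" "Kb g K" "y \<in> ell2"
  shows "summable (\<lambda>m. cmod (Mx g h i m) * cmod (y m))"
    and "summable (\<lambda>m. cmod (Mx g h i m) * (cmod (y m))^2)"
    and "(\<Sum>m. cmod (Mx g h i m) * cmod (y m))^2 \<le> K * (\<Sum>m. cmod (Mx g h i m) * (cmod (y m))^2)"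
proof -
  have rs: "summable (\<lambda>m. cmod (Mx g h i m))" "(\<Sum>m. cmod (Mx g h i m)) \<le> K"
    using row_summable[OF assms(1,2)] by auto
  have ys: "summable (\<lambda>m. (cmod (y m))^2)" using assms(3) by (simp add: ell2_def)
  show s2: "summable (\<lambda>m. cmod (Mx g h i m) * (cmod (y m))^2)"
    by (rule summable_comparison_test'[OF summable_mult[OF ys, of K]])
       (auto intro!: mult_right_mono Mx_le[OF assms(1,2)])
  define u where "u m = complex_of_real (sqrt (cmod (Mx g h i m)))" for m
  define v where "v m = complex_of_real (sqrt (cmod (Mx g h i m)) * cmod (y m))" for m
  have u: "u \<in> ell2" using rs(1) by (simp add: ell2_def u_def)
  have vsq: "(cmod (v m))^2 = cmod (Mx g h i m) * (cmod (y m))^2" for m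
    by (simp add: v_def norm_mult power_mult_distrib abs_mult)
  have v: "v \<in> ell2" using s2 by (simp add: ell2_def vsq)
  have uv: "cmod (u m) * cmod (v m) = cmod (Mx g h i m) * cmod (y m)" for m
    by (simp add: u_def v_def abs_mult norm_mult mult.assoc[symmetric])
  from ell2_CS[OF u v] show s1: "summable (\<lambda>m. cmod (Mx g h i m) * cmod (y m))"
    by (simp add: uv)
  have le: "(\<Sum>m. cmod (Mx g h i m) * cmod (y m)) \<le> ell2_norm u * ell2_norm v"
    using ell2_CS[OF u v] by (simp add: uv)
  have "(\<Sum>m. cmod (Mx g h i m) * cmod (y m))^2 \<le> (ell2_norm u * ell2_norm v)^2"
    by (rule power_mono[OF le]) (intro suminf_nonneg s1, simp)
  also have "\<dots> = (ell2_norm u)^2 * (ell2_norm v)^2" by (simp add: power_mult_distrib)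
  also have "(ell2_norm u)^2 = (\<Sum>m. cmod (Mx g h i m))"
    by (simp add: ell2_norm_sq[OF u] u_def)
  also have "(ell2_norm v)^2 = (\<Sum>m. cmod (Mx g h i m) * (cmod (y m))^2)"
    by (simp add: ell2_norm_sq[OF v] vsq)
  also have "(\<Sum>m. cmod (Mx g h i m)) * (\<Sum>m. cmod (Mx g h i m) * (cmod (y m))^2)
     \<le> K * (\<Sum>m. cmod (Mx g h i m) * (cmod (y m))^2)"
    by (intro mult_right_mono rs(2) suminf_nonneg s2) simp
  finally show "(\<Sum>m. cmod (Mx g h i m) * cmod (y m))^2 \<le> K * (\<Sum>m. cmod (Mx g h i m) * (cmod (y m))^2)" .
qed

lemma Top_summable:
  assumes "unim h" "Kb g K" "y \<in> ell2"
  shows "summable (\<lambda>m. Mx g h i m * y m)"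
  using summable_norm_cancel[of "\<lambda>m. Mx g h i m * y m"] coord_est(1)[OF assms, of i]
  by (simp add: norm_mult)

lemma Top_coord_le:
  assumes "unim h" "Kb g K" "y \<in> ell2"
  shows "cmod (Top g h y i) \<le> (\<Sum>m. cmod (Mx g h i m) * cmod (y m))"
  unfolding Top_def using summable_norm[of "\<lambda>m. Mx g h i m * y m"] coord_est(1)[OF assms, of i]
  by (simp add: norm_mult)

lemma Top_ell2:
  assumes "unim h" "Kb g K" "y \<in> ell2"
  shows "Top g h y \<in> ell2 \<and> ell2_norm (Top g h y) \<le> K * ell2_norm y"
proof (rule ell2_normI)
  have K: "1 \<le> K" by (rule Kb_ge1[OF assms(2)])
  fix N
  have ys: "summable (\<lambda>m. (cmod (y m))^2)" using assms(3) by (simp add: ell2_def)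
  have "(\<Sum>i<N. (cmod (Top g h y i))^2) \<le> (\<Sum>i<N. K * (\<Sum>m. cmod (Mx g h i m) * (cmod (y m))^2))"
  proof (rule sum_mono)
    fix i
    have "(cmod (Top g h y i))^2 \<le> (\<Sum>m. cmod (Mx g h i m) * cmod (y m))^2"
      by (rule power_mono[OF Top_coord_le[OF assms]]) simp
    also have "\<dots> \<le> K * (\<Sum>m. cmod (Mx g h i m) * (cmod (y m))^2)" by (rule coord_est(3)[OF assms])
    finally show "(cmod (Top g h y i))^2 \<le> K * (\<Sum>m. cmod (Mx g h i m) * (cmod (y m))^2)" .
  qed
  also have "\<dots> = K * (\<Sum>m. (\<Sum>i<N. cmod (Mx g h i m)) * (cmod (y m))^2)"
    by (simp add: sum_distrib_left[symmetric] suminf_sum[symmetric] coord_est(2)[OF assms] sum_distrib_right)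
  also have "\<dots> \<le> K * (\<Sum>m. K * (cmod (y m))^2)"
  proof (intro mult_left_mono suminf_le)
    show "summable (\<lambda>m. (\<Sum>i<N. cmod (Mx g h i m)) * (cmod (y m))^2)"
      by (simp only: sum_distrib_right) (rule summable_sum, rule coord_est(2)[OF assms])
  qed (use K col_bound[OF assms(1,2)] ys in \<open>auto intro!: mult_right_mono summable_mult\<close>)
  also have "\<dots> = (K * ell2_norm y)^2"
  proof -
    have "(\<Sum>m. K * (cmod (y m))^2) = K * (ell2_norm y)^2"
      using suminf_mult[OF ys, of K] ell2_norm_sq[OF assms(3)] by simp
    then show ?thesis by (simp add: power_mult_distrib power2_eq_square)
  qed
  finally show "(\<Sum>i<N. (cmod (Top g h y i))^2) \<le> (K * ell2_norm y)^2" .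
next
  show "0 \<le> K * ell2_norm y" using Kb_ge1[OF assms(2)] ell2_norm_nonneg[OF assms(3)] by simp
qed

lemma Top_add:
  assumes "unim h" "Kb g K" "x \<in> ell2" "y \<in> ell2"
  shows "Top g h (\<lambda>i. x i + y i) = (\<lambda>i. Top g h x i + Top g h y i)"
  unfolding Top_def
  by (simp add: distrib_left suminf_add Top_summable[OF assms(1,2,3)] Top_summable[OF assms(1,2,4)])

lemma Top_scale:
  assumes "unim h" "Kb g K" "x \<in> ell2"
  shows "Top g h (\<lambda>i. c * x i) = (\<lambda>i. c * Top g h x i)"
  unfolding Top_def
  using suminf_mult[OF Top_summable[OF assms], of c]
  by (simp add: mult.left_commute)

lemma Top_diff:
  assumes "unim h" "Kb g K" "x \<in> ell2" "y \<in> ell2"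
  shows "Top g h (\<lambda>i. x i - y i) = (\<lambda>i. Top g h x i - Top g h y i)"
  unfolding Top_def
  by (simp add: right_diff_distrib suminf_diff Top_summable[OF assms(1,2,3)] Top_summable[OF assms(1,2,4)])

lemma Top_coord_norm:
  assumes "unim h" "Kb g K" "y \<in> ell2"
  shows "cmod (Top g h y i) \<le> K * ell2_norm y"
  using coord_le_norm[OF Top_ell2[OF assms, THEN conjunct1], of i] Top_ell2[OF assms] by linarith



definition tr :: "nat \<Rightarrow> (nat \<Rightarrow> complex) \<Rightarrow> nat \<Rightarrow> complex" where
  "tr J x = (\<lambda>m. if m < J then x m else 0)"

lemma tr_ell2: "tr J x \<in> ell2"
  by (rule ell2_finite_support[of J]) (simp add: tr_def)

lemma tail_tendsto:
  fixes a :: "nat \<Rightarrow> real" assumes "summable a"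
  shows "(\<lambda>J. \<Sum>m. (if m < J then 0 else a m)) \<longlonglongrightarrow> 0"
proof -
  have eq: "(\<Sum>m. (if m < J then 0 else a m)) = suminf a - (\<Sum>m<J. a m)" for J
  proof -
    have s1: "summable (\<lambda>m. if m < J then a m else 0)" by (rule summable_finite[of "{..<J}"]) auto
    have f: "(\<Sum>m. if m < J then a m else 0) = (\<Sum>m<J. a m)" by (subst suminf_finite[of "{..<J}"]) auto
    have "(\<lambda>m. if m < J then 0 else a m) = (\<lambda>m. a m - (if m < J then a m else 0))" by auto
    then show ?thesis using suminf_diff[OF assms s1] f by simp
  qed
  have "(\<lambda>J. suminf a - (\<Sum>m<J. a m)) \<longlonglongrightarrow> suminf a - suminf a"
    by (intro tendsto_diff tendsto_const summable_LIMSEQ assms)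
  then show ?thesis by (simp add: eq)
qed

lemma tr_conv:
  assumes "x \<in> ell2" shows "(\<lambda>J. ell2_norm (\<lambda>m. x m - tr J x m)) \<longlonglongrightarrow> 0"
proof -
  have eq: "ell2_norm (\<lambda>m. x m - tr J x m) = sqrt (\<Sum>m. (if m < J then 0 else (cmod (x m))^2))" for J
  proof -
    have "(\<lambda>m. (cmod (x m - tr J x m))^2) = (\<lambda>m. (if m < J then 0 else (cmod (x m))^2))"
      by (auto simp: tr_def)
    then show ?thesis by (simp add: ell2_norm_def)
  qed
  have "(\<lambda>J. sqrt (\<Sum>m. (if m < J then 0 else (cmod (x m))^2))) \<longlonglongrightarrow> sqrt 0"
    by (intro tendsto_real_sqrt tail_tendsto) (use assms in \<open>simp add: ell2_def\<close>)
  then show ?thesis by (simp add: eq)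
qed

lemma null_le:
  fixes f g :: "nat \<Rightarrow> real"
  assumes "\<And>J. norm (F J) \<le> C * g J" "g \<longlonglongrightarrow> 0"
  shows "F \<longlonglongrightarrow> 0"
proof (rule Lim_null_comparison[of _ "\<lambda>J. C * g J"])
  show "\<forall>\<^sub>F J in sequentially. norm (F J) \<le> C * g J" using assms(1) by simp
  show "(\<lambda>J. C * g J) \<longlonglongrightarrow> 0" using tendsto_mult_right_zero[OF assms(2), of C] by simp
qed

lemma Top_cont:
  assumes "unim h" "Kb g K" "x \<in> ell2" "\<And>J. y J \<in> ell2"
    and "(\<lambda>J. ell2_norm (\<lambda>m. x m - y J m)) \<longlonglongrightarrow> 0"
  shows "(\<lambda>J. Top g h (y J) i) \<longlonglongrightarrow> Top g h x i"
proof -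
  have "(\<lambda>J. Top g h x i - Top g h (y J) i) \<longlonglongrightarrow> 0"
  proof (rule null_le[OF _ assms(5)])
    fix J
    have "Top g h x i - Top g h (y J) i = Top g h (\<lambda>m. x m - y J m) i"
      using Top_diff[OF assms(1,2,3,4)] by metis
    then show "norm (Top g h x i - Top g h (y J) i) \<le> K * ell2_norm (\<lambda>m. x m - y J m)"
      using Top_coord_norm[OF assms(1,2) ell2_diff[OF assms(3,4)]] by simp
  qed
  then have "(\<lambda>J. Top g h x i - (Top g h x i - Top g h (y J) i)) \<longlonglongrightarrow> Top g h x i - 0"
    by (intro tendsto_diff tendsto_const)
  then show ?thesis by simp
qed

lemma Top_cont_norm:
  assumes "unim h" "Kb g K" "x \<in> ell2" "\<And>J. y J \<in> ell2"
    and "(\<lambda>J. ell2_norm (\<lambda>m. x m - y J m)) \<longlonglongrightarrow> 0"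
  shows "(\<lambda>J. ell2_norm (\<lambda>m. Top g h x m - Top g h (y J) m)) \<longlonglongrightarrow> 0"
proof (rule null_le[OF _ assms(5)])
  fix J
  have e: "(\<lambda>m. Top g h x m - Top g h (y J) m) = Top g h (\<lambda>m. x m - y J m)"
    using Top_diff[OF assms(1,2,3,4)] by metis
  have d: "(\<lambda>m. x m - y J m) \<in> ell2" by (rule ell2_diff[OF assms(3,4)])
  show "norm (ell2_norm (\<lambda>m. Top g h x m - Top g h (y J) m)) \<le> K * ell2_norm (\<lambda>m. x m - y J m)"
    unfolding e using Top_ell2[OF assms(1,2) d] ell2_norm_nonneg[OF Top_ell2[OF assms(1,2) d, THEN conjunct1]]
    by simp
qed

lemma Mx_le_idx: "Mx g h i m \<noteq> 0 \<Longrightarrow> i \<le> m"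
  by (metis Mx_zero subset_decode_imp_le)

lemma Mx_prod:
  "(\<Sum>m. Mx G H i m * Mx G' H' m k) = Mx (\<lambda>j. G j * H' j + G' j) (\<lambda>j. H j * H' j) i k"
proof -
  define B where "B = bits k"
  define I where "I = bits i"
  have fB: "finite B" by (simp add: B_def)
  define F where "F S = (if I \<subseteq> S then (\<Prod>j\<in>S - I. G j) * (\<Prod>j\<in>I. H j) else 0) *
      (if S \<subseteq> B then (\<Prod>j\<in>B - S. G' j) * (\<Prod>j\<in>S. H' j) else 0)" for S
  have MF: "Mx G H i m * Mx G' H' m k = F (bits m)" for m
    by (simp add: Mx_def F_def B_def I_def)
  have "(\<Sum>m. Mx G H i m * Mx G' H' m k) = (\<Sum>m | bits m \<subseteq> B. Mx G H i m * Mx G' H' m k)"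
    by (rule suminf_finite) (auto simp: finite_codes fB B_def Mx_zero)
  also have "\<dots> = (\<Sum>S\<in>Pow B. F S)" unfolding MF by (rule sum_codes[OF fB])
  also have "\<dots> = Mx (\<lambda>j. G j * H' j + G' j) (\<lambda>j. H j * H' j) i k"
  proof (cases "I \<subseteq> B")
    case False
    then have "\<And>S. S \<in> Pow B \<Longrightarrow> F S = 0" by (auto simp: F_def)
    then show ?thesis using False by (simp add: Mx_def I_def B_def)
  next
    case True
    have fI: "finite I" using True fB finite_subset by blast
    have "(\<Sum>S\<in>Pow B. F S) = (\<Sum>S\<in>{S\<in>Pow B. I \<subseteq> S}. F S)"
      by (rule sum.mono_neutral_right) (auto simp: fB F_def)
    also have "\<dots> = (\<Sum>R\<in>Pow (B - I). (\<Prod>j\<in>I. H j * H' j) *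
                     ((\<Prod>j\<in>R. G j * H' j) * (\<Prod>j\<in>(B - I) - R. G' j)))"
    proof (rule sum.reindex_bij_witness[of _ "\<lambda>R. R \<union> I" "\<lambda>S. S - I"])
      fix S assume S: "S \<in> {S\<in>Pow B. I \<subseteq> S}"
      define R where "R = S - I"
      have SR: "S = R \<union> I" using S by (auto simp: R_def)
      have RB: "R \<subseteq> B" using S by (auto simp: R_def)
      then have fR: "finite R" using fB finite_subset by auto
      have d: "R \<inter> I = {}" by (auto simp: R_def)
      have e1: "B - S = (B - I) - R" using S by (auto simp: R_def)
      have e2: "(\<Prod>j\<in>R \<union> I. H' j) = (\<Prod>j\<in>R. H' j) * (\<Prod>j\<in>I. H' j)"
        by (rule prod.union_disjoint[OF fR fI d])
      have "F S = (\<Prod>j\<in>I. H j * H' j) * ((\<Prod>j\<in>R. G j * H' j) * (\<Prod>j\<in>(B - I) - R. G' j))"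
        using S by (simp add: F_def e1 SR[symmetric] R_def[symmetric] e2[unfolded SR[symmetric]] prod.distrib mult_ac)
      then show "(\<Prod>j\<in>I. H j * H' j) * ((\<Prod>j\<in>S - I. G j * H' j) * (\<Prod>j\<in>(B - I) - (S - I). G' j)) = F S"
        by (simp add: R_def)
    qed (use True in auto)
    also have "\<dots> = (\<Prod>j\<in>I. H j * H' j) * (\<Prod>j\<in>B - I. G j * H' j + G' j)"
      by (simp add: sum_distrib_left[symmetric] prod_add fB)
    also have "\<dots> = Mx (\<lambda>j. G j * H' j + G' j) (\<lambda>j. H j * H' j) i k"
      using True by (simp add: Mx_def I_def B_def mult.commute)
    finally show ?thesis .
  qed
  finally show ?thesis .
qed


lemma Top_tr_finite: "Top G H (tr J x) m = (\<Sum>k<J. Mx G H m k * x k)"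
  unfolding Top_def tr_def by (subst suminf_finite[of "{..<J}"]) auto

lemma Top_comp:
  assumes "unim H" "Kb G K" "unim H'" "Kb G' K'" "unim (\<lambda>j. H j * H' j)"
    "Kb (\<lambda>j. G j * H' j + G' j) K''" "x \<in> ell2"
  shows "Top G H (Top G' H' x) = Top (\<lambda>j. G j * H' j + G' j) (\<lambda>j. H j * H' j) x"
proof
  fix i
  define y where "y J = Top G' H' (tr J x)" for J
  have yl: "y J \<in> ell2" for J unfolding y_def using Top_ell2[OF assms(3,4) tr_ell2] by simp
  have tx: "Top G' H' x \<in> ell2" using Top_ell2[OF assms(3,4,7)] by simp
  have lim1: "(\<lambda>J. Top G H (y J) i) \<longlonglongrightarrow> Top G H (Top G' H' x) i"
    by (rule Top_cont[OF assms(1,2) tx yl]) (unfold y_def, rule Top_cont_norm[OF assms(3,4,7) tr_ell2 tr_conv[OF assms(7)]])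
  have eq: "Top G H (y J) i = (\<Sum>k<J. Mx (\<lambda>j. G j * H' j + G' j) (\<lambda>j. H j * H' j) i k * x k)" for J
  proof -
    have sm: "summable (\<lambda>m. Mx G H i m * Mx G' H' m k * x k)" for k
      by (rule summable_finite[of "{..k}"]) (auto dest: Mx_le_idx)
    have yJ: "y J = (\<lambda>m. \<Sum>k<J. Mx G' H' m k * x k)"
      using Top_tr_finite by (auto simp: y_def)
    have "Top G H (y J) i = (\<Sum>m. Mx G H i m * (\<Sum>k<J. Mx G' H' m k * x k))"
      by (simp only: Top_def yJ)
    also have "\<dots> = (\<Sum>m. \<Sum>k<J. Mx G H i m * Mx G' H' m k * x k)"
      by (simp add: sum_distrib_left mult.assoc)
    also have "\<dots> = (\<Sum>k<J. \<Sum>m. Mx G H i m * Mx G' H' m k * x k)"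
      by (rule suminf_sum) (rule sm)
    also have "\<dots> = (\<Sum>k<J. (\<Sum>m. Mx G H i m * Mx G' H' m k) * x k)"
    proof (intro sum.cong refl)
      fix k
      have sm2: "summable (\<lambda>m. Mx G H i m * Mx G' H' m k)"
        by (rule summable_finite[of "{..k}"]) (auto dest: Mx_le_idx)
      show "(\<Sum>m. Mx G H i m * Mx G' H' m k * x k) = (\<Sum>m. Mx G H i m * Mx G' H' m k) * x k"
        by (rule suminf_mult2[OF sm2, symmetric])
    qed
    finally show ?thesis by (simp add: Mx_prod)
  qed
  have lim2: "(\<lambda>J. Top G H (y J) i) \<longlonglongrightarrow> Top (\<lambda>j. G j * H' j + G' j) (\<lambda>j. H j * H' j) x i"
    unfolding eq using summable_LIMSEQ[OF Top_summable[OF assms(5,6,7)]] by (simp add: Top_def)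
  show "Top G H (Top G' H' x) i = Top (\<lambda>j. G j * H' j + G' j) (\<lambda>j. H j * H' j) x i"
    by (rule LIMSEQ_unique[OF lim1 lim2])
qed

lemma Mx_id: "Mx (\<lambda>_. 0) (\<lambda>_. 1) i m = (if m = i then 1 else 0)"
proof (cases "bits i \<subseteq> bits m")
  case True
  show ?thesis
  proof (cases "bits m = bits i")
    case True
    then have "m = i" by (metis set_decode_inverse)
    then show ?thesis by (simp add: Mx_def)
  next
    case False
    then have "bits m - bits i \<noteq> {}" using \<open>bits i \<subseteq> bits m\<close> by auto
    then have "m \<noteq> i" by auto
    then show ?thesis using \<open>bits m - bits i \<noteq> {}\<close> True by (simp add: Mx_def card_gt_0_iff)
  qed
next
  case False
  then show ?thesis by (auto simp: Mx_def)
qed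

lemma Top_id: "Top (\<lambda>_. 0) (\<lambda>_. 1) x = x"
proof
  fix i
  show "Top (\<lambda>_. 0) (\<lambda>_. 1) x i = x i"
    unfolding Top_def Mx_id by (subst suminf_finite[of "{i}"]) auto
qed



lemma unim_pow: "unim lam \<Longrightarrow> unim (\<lambda>j. lam j ^ n)"
  by (simp add: unim_def norm_power)

lemma Top_pow:
  fixes t lam :: "nat \<Rightarrow> complex"
  assumes "unim lam" "\<And>n. \<exists>K. Kb (\<lambda>j. t j * (lam j ^ n - 1)) K" "x \<in> ell2"
  shows "(Top (\<lambda>j. t j * (lam j - 1)) lam ^^ n) x = Top (\<lambda>j. t j * (lam j ^ n - 1)) (\<lambda>j. lam j ^ n) x"
  using assms(3)
proof (induction n arbitrary: x)
  case 0
  have "(\<lambda>j. t j * (lam j ^ 0 - 1)) = (\<lambda>_. 0)" "(\<lambda>j. lam j ^ 0) = (\<lambda>_. 1)" by auto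
  then show ?case by (simp add: Top_id)
next
  case (Suc n)
  obtain K1 where K1: "Kb (\<lambda>j. t j * (lam j - 1)) K1" using assms(2)[of 1] by auto
  obtain Kn where Kn: "Kb (\<lambda>j. t j * (lam j ^ n - 1)) Kn" using assms(2) by blast
  obtain Ks where Ks: "Kb (\<lambda>j. t j * (lam j ^ Suc n - 1)) Ks" using assms(2) by blast
  have fe: "(\<lambda>j. t j * (lam j - 1) * lam j ^ n + t j * (lam j ^ n - 1)) = (\<lambda>j. t j * (lam j ^ Suc n - 1))"
  proof
    fix j show "t j * (lam j - 1) * lam j ^ n + t j * (lam j ^ n - 1) = t j * (lam j ^ Suc n - 1)"
      by (simp add: algebra_simps)
  qed
  have he: "(\<lambda>j. lam j * lam j ^ n) = (\<lambda>j. lam j ^ Suc n)" by auto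
  have ih: "(Top (\<lambda>j. t j * (lam j - 1)) lam ^^ n) x = Top (\<lambda>j. t j * (lam j ^ n - 1)) (\<lambda>j. lam j ^ n) x"
    by (rule Suc.IH[OF Suc.prems])
  have "(Top (\<lambda>j. t j * (lam j - 1)) lam ^^ Suc n) x = Top (\<lambda>j. t j * (lam j - 1)) lam ((Top (\<lambda>j. t j * (lam j - 1)) lam ^^ n) x)"
    by simp
  also have "\<dots> = Top (\<lambda>j. t j * (lam j - 1)) lam (Top (\<lambda>j. t j * (lam j ^ n - 1)) (\<lambda>j. lam j ^ n) x)"
    by (simp only: ih)
  also have "\<dots> = Top (\<lambda>j. t j * (lam j - 1) * lam j ^ n + t j * (lam j ^ n - 1)) (\<lambda>j. lam j * lam j ^ n) x"
  proof (rule Top_comp[OF assms(1) K1 unim_pow[OF assms(1)] Kn _ _ Suc.prems])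
    show "unim (\<lambda>j. lam j * lam j ^ n)" unfolding he by (rule unim_pow[OF assms(1)])
    show "Kb (\<lambda>j. t j * (lam j - 1) * lam j ^ n + t j * (lam j ^ n - 1)) Ks" unfolding fe by (rule Ks)
  qed
  also have "\<dots> = Top (\<lambda>j. t j * (lam j ^ Suc n - 1)) (\<lambda>j. lam j ^ Suc n) x"
    by (simp only: fe he)
  finally show ?case .
qed



lemma geom_sum_le:
  assumes "finite A" shows "(\<Sum>j\<in>A. (1/2::real)^(j+1)) \<le> 1"
proof -
  obtain N where N: "A \<subseteq> {..<N}" using assms by (auto simp: finite_nat_set_iff_bounded)
  have "(\<Sum>j\<in>A. (1/2::real)^(j+1)) \<le> (\<Sum>j<N. (1/2)^(j+1))" by (rule sum_mono2) (use N in auto)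
  also have "(\<Sum>j<N. (1/2::real)^(j+1)) = 1 - (1/2)^N" by (induction N) auto
  finally have "(\<Sum>j\<in>A. (1/2::real)^(j+1)) \<le> 1 - (1/2)^N" .
  moreover have "(0::real) \<le> (1/2)^N" by simp
  ultimately show ?thesis by linarith
qed

lemma Kb_geom:
  assumes "\<And>j. cmod (g j) \<le> C * (1/2)^(j+1)" "0 \<le> C"
  shows "Kb g (exp C)"
  unfolding Kb_def
proof (intro allI impI)
  fix A :: "nat set" assume A: "finite A"
  have "(\<Prod>j\<in>A. 1 + cmod (g j)) \<le> (\<Prod>j\<in>A. exp (cmod (g j)))"
    by (intro prod_mono) (auto simp: add_nonneg_nonneg)
  also have "\<dots> = exp (\<Sum>j\<in>A. cmod (g j))" by (simp add: exp_sum A)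
  also have "\<dots> \<le> exp (C * (\<Sum>j\<in>A. (1/2)^(j+1)))"
    unfolding sum_distrib_left by (simp only: exp_le_cancel_iff) (intro sum_mono assms)
  also have "\<dots> \<le> exp C"
    using mult_left_mono[OF geom_sum_le[OF A] assms(2)] by simp
  finally show "(\<Prod>j\<in>A. 1 + cmod (g j)) \<le> exp C" .
qed

definition wv :: "nat \<Rightarrow> complex" where "wv j = of_real ((1/2)^j)"

definition Ev :: "(nat \<Rightarrow> bool) \<Rightarrow> nat \<Rightarrow> complex" where
  "Ev a m = (if bits m \<subseteq> {j. a j} then (\<Prod>j\<in>bits m. wv j) else 0)"

definition Wt :: "nat \<Rightarrow> real" where "Wt m = (\<Prod>j\<in>bits m. (1/4)^j)"

lemma Wt_nonneg: "0 \<le> Wt m" by (simp add: Wt_def prod_nonneg)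

lemma Wt_summable: "summable Wt"
proof -
  have Kb: "Kb (\<lambda>j. of_real ((1/4)^j)) (exp 2)"
  proof (rule Kb_geom)
    fix j
    have "(1/4::real)^j = ((1/2)^j)^2" by (simp add: power2_eq_square power_mult_distrib[symmetric])
    also have "\<dots> \<le> (1/2)^j" by (simp add: power2_eq_square mult_le_one power_le_one)
    finally show "cmod (of_real ((1/4)^j)) \<le> 2 * (1/2)^(j+1)" by (simp add: norm_power)
  qed simp
  show ?thesis
  proof (rule bounded_summable_nonneg[THEN conjunct1])
    fix N
    have "(\<Sum>m<N. Wt m) \<le> (\<Sum>m | bits m \<subseteq> {..<N}. Wt m)"
      by (intro sum_mono2 finite_codes) (auto simp: Wt_nonneg dest: bit_lt)
    also have "\<dots> = (\<Sum>S\<in>Pow {..<N}. \<Prod>j\<in>S. (1/4)^j)"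
      unfolding Wt_def by (rule sum_codes) simp
    also have "\<dots> = (\<Prod>j<N. 1 + (1/4)^j)" by (rule sum_Pow_prod) simp
    also have "\<dots> \<le> exp 2" using Kb unfolding Kb_def by (auto simp: norm_power)
    finally show "(\<Sum>m<N. Wt m) \<le> exp 2" .
  qed (rule Wt_nonneg)
qed

lemma Ev_sq: "(cmod (Ev a m))^2 = (if bits m \<subseteq> {j. a j} then Wt m else 0)"
proof -
  have q: "(1/2::real)^j * (1/2)^j = (1/4)^j" for j by (simp add: power_mult_distrib[symmetric])
  have "(\<Prod>j\<in>bits m. (1/2::real)^j)^2 = (\<Prod>j\<in>bits m. (1/4)^j)"
    by (simp add: power2_eq_square prod.distrib[symmetric] q)
  then show ?thesis
    by (simp add: Ev_def Wt_def wv_def prod_norm[symmetric] norm_power)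
qed

lemma Ev_ell2: "Ev a \<in> ell2"
  unfolding ell2_def mem_Collect_eq
  by (rule summable_comparison_test'[OF Wt_summable]) (auto simp: Ev_sq Wt_nonneg)

definition atr :: "nat \<Rightarrow> (nat \<Rightarrow> bool) \<Rightarrow> nat \<Rightarrow> bool" where
  "atr J a = (\<lambda>j. a j \<and> j < J)"

lemma Ev_atr_eq:
  assumes "i \<le> J" shows "Ev (atr J a) i = Ev a i"
proof -
  have "\<forall>j\<in>bits i. j < J" using bit_lt assms less_le_trans by blast
  then have "bits i \<subseteq> {j. atr J a j} \<longleftrightarrow> bits i \<subseteq> {j. a j}" by (auto simp: atr_def)
  then show ?thesis by (simp add: Ev_def)
qed

lemma Ev_approx:
  "ell2_norm (\<lambda>m. Ev a m - Ev (atr J a) m) \<le> sqrt (\<Sum>m. if m < J then 0 else Wt m)"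
proof -
  have st: "summable (\<lambda>m. if m < J then 0 else Wt m)"
    by (rule summable_comparison_test'[OF Wt_summable]) (auto simp: Wt_nonneg)
  have le: "(cmod (Ev a m - Ev (atr J a) m))^2 \<le> (if m < J then 0 else Wt m)" for m
  proof (cases "m < J")
    case True then show ?thesis using Ev_atr_eq[of m J a] by simp
  next
    case False
    show ?thesis
    proof (cases "bits m \<subseteq> {j. atr J a j}")
      case True
      then have "bits m \<subseteq> {j. a j}" by (auto simp: atr_def)
      then show ?thesis using True False by (simp add: Ev_def Wt_nonneg)
    next
      case F2: False
      then have "Ev (atr J a) m = 0" by (simp add: Ev_def)
      then show ?thesis using False Ev_sq[of a m] by (simp add: Wt_nonneg)
    qed
  qed
  have d: "(\<lambda>m. Ev a m - Ev (atr J a) m) \<in> ell2" by (rule ell2_diff[OF Ev_ell2 Ev_ell2])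
  show ?thesis unfolding ell2_norm_def
    by (intro real_sqrt_le_mono suminf_le le st) (use d in \<open>simp add: ell2_def\<close>)
qed

lemma Ev_approx_tendsto: "(\<lambda>J. sqrt (\<Sum>m. if m < J then 0 else Wt m)) \<longlonglongrightarrow> 0"
  using tendsto_real_sqrt[OF tail_tendsto[OF Wt_summable]] by simp

lemma Ev_conv: "(\<lambda>J. ell2_norm (\<lambda>m. Ev a m - Ev (atr J a) m)) \<longlonglongrightarrow> 0"
proof (rule null_le[OF _ Ev_approx_tendsto, of _ 1])
  fix J
  have "0 \<le> ell2_norm (\<lambda>m. Ev a m - Ev (atr J a) m)" by (rule ell2_norm_nonneg[OF ell2_diff[OF Ev_ell2 Ev_ell2]])
  then show "norm (ell2_norm (\<lambda>m. Ev a m - Ev (atr J a) m)) \<le> 1 * sqrt (\<Sum>m. if m < J then 0 else Wt m)"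
    using Ev_approx[of a J] by simp
qed

lemma Ev_fin_Mx: "finite {j. b j} \<Longrightarrow> Ev b m = Mx (\<lambda>_. 1) wv m (set_encode {j. b j})"
  by (simp add: Ev_def Mx_def)

lemma two_wv: "(2::complex)^j * wv j = 1"
  by (simp add: wv_def power_mult_distrib[symmetric])

lemma eig_fin:
  assumes "finite {j. b j}"
  shows "Top (\<lambda>j. 2^j * (lam j - 1)) lam (Ev b) i = (\<Prod>j\<in>{j. b j}. lam j) * Ev b i"
proof -
  define Z where "Z = {j. b j}"
  have fZ: "finite Z" using assms by (simp add: Z_def)
  have fe: "(\<lambda>j. 2^j * (lam j - 1) * wv j + 1) = lam"
  proof
    fix j show "2^j * (lam j - 1) * wv j + 1 = lam j"
      using two_wv[of j] by (simp add: algebra_simps)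
  qed
  have "Top (\<lambda>j. 2^j * (lam j - 1)) lam (Ev b) i = (\<Sum>m. Mx (\<lambda>j. 2^j * (lam j - 1)) lam i m * Mx (\<lambda>_. 1) wv m (set_encode Z))"
    by (simp add: Top_def Ev_fin_Mx[OF assms] Z_def)
  also have "\<dots> = Mx lam (\<lambda>j. lam j * wv j) i (set_encode Z)"
    using Mx_prod[of "\<lambda>j. 2^j * (lam j - 1)" lam i "\<lambda>_. 1" wv "set_encode Z"] by (simp add: fe)
  also have "\<dots> = (\<Prod>j\<in>Z. lam j) * Ev b i"
  proof (cases "bits i \<subseteq> Z")
    case True
    have "(\<Prod>j\<in>Z. lam j) = (\<Prod>j\<in>Z - bits i. lam j) * (\<Prod>j\<in>bits i. lam j)"
      by (rule prod.subset_diff[OF True fZ])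
    then show ?thesis using True fZ by (simp add: Mx_def Ev_def Z_def prod.distrib)
  next
    case False then show ?thesis using fZ by (simp add: Mx_def Ev_def Z_def)
  qed
  finally show ?thesis by (simp add: Z_def)
qed

definition muJ :: "(nat \<Rightarrow> complex) \<Rightarrow> nat \<Rightarrow> (nat \<Rightarrow> bool) \<Rightarrow> complex" where
  "muJ lam J a = (\<Prod>j<J. if a j then lam j else 1)"

definition mu :: "(nat \<Rightarrow> complex) \<Rightarrow> (nat \<Rightarrow> bool) \<Rightarrow> complex" where
  "mu lam a = lim (\<lambda>J. muJ lam J a)"

lemma muJ_atr: "muJ lam J a = (\<Prod>j\<in>{j. atr J a j}. lam j)"
proof -
  have e: "{j. atr J a j} = {j\<in>{..<J}. a j}" by (auto simp: atr_def)
  have "(\<Prod>j\<in>{j\<in>{..<J}. a j}. lam j) = (\<Prod>j<J. if a j then lam j else 1)"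
    by (rule prod.inter_filter) simp
  then show ?thesis unfolding e muJ_def by simp
qed

lemma finite_atr: "finite {j. atr J a j}"
  by (rule finite_subset[of _ "{..<J}"]) (auto simp: atr_def)

lemma muJ_norm:
  assumes "unim lam" shows "cmod (muJ lam J a) = 1"
proof -
  have "cmod (if a x then lam x else 1) = 1" for x using assms by (simp add: unim_def)
  then show ?thesis by (simp add: muJ_def prod_norm[symmetric])
qed

lemma conv_telescope:
  fixes f :: "nat \<Rightarrow> complex"
  assumes "summable (\<lambda>n. norm (f (Suc n) - f n))"
  shows "convergent f"
proof -
  have s: "summable (\<lambda>n. f (Suc n) - f n)" by (rule summable_norm_cancel[OF assms])
  have e: "f n = f 0 + (\<Sum>i<n. f (Suc i) - f i)" for n
    by (simp add: sum_lessThan_telescope)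
  have "(\<lambda>n. f 0 + (\<Sum>i<n. f (Suc i) - f i)) \<longlonglongrightarrow> f 0 + (\<Sum>i. f (Suc i) - f i)"
    by (intro tendsto_add tendsto_const summable_LIMSEQ s)
  then show ?thesis unfolding e[symmetric] by (auto simp: convergent_def)
qed

lemma muJ_conv:
  assumes "unim lam" "summable (\<lambda>j. cmod (lam j - 1))"
  shows "(\<lambda>J. muJ lam J a) \<longlonglongrightarrow> mu lam a"
proof -
  have "convergent (\<lambda>J. muJ lam J a)"
  proof (rule conv_telescope)
    show "summable (\<lambda>n. norm (muJ lam (Suc n) a - muJ lam n a))"
    proof (rule summable_comparison_test'[OF assms(2)])
      fix n
      have "muJ lam (Suc n) a - muJ lam n a = muJ lam n a * ((if a n then lam n else 1) - 1)"
        by (simp add: muJ_def algebra_simps)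
      then show "norm (norm (muJ lam (Suc n) a - muJ lam n a)) \<le> cmod (lam n - 1)"
        using muJ_norm[OF assms(1), of n a] by (simp add: norm_mult)
    qed
  qed
  then show ?thesis by (simp add: mu_def convergent_LIMSEQ_iff)
qed

lemma mu_norm:
  assumes "unim lam" "summable (\<lambda>j. cmod (lam j - 1))"
  shows "cmod (mu lam a) = 1"
proof -
  have "(\<lambda>J. cmod (muJ lam J a)) \<longlonglongrightarrow> cmod (mu lam a)"
    by (intro tendsto_norm muJ_conv assms)
  then show ?thesis using muJ_norm[OF assms(1)] by (simp add: LIMSEQ_const_iff)
qed

lemma eig:
  assumes "unim lam" "summable (\<lambda>j. cmod (lam j - 1))" "Kb (\<lambda>j. 2^j * (lam j - 1)) K"
  shows "Top (\<lambda>j. 2^j * (lam j - 1)) lam (Ev a) = (\<lambda>i. mu lam a * Ev a i)"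
proof
  fix i
  have lim1: "(\<lambda>J. Top (\<lambda>j. 2^j * (lam j - 1)) lam (Ev (atr J a)) i) \<longlonglongrightarrow> Top (\<lambda>j. 2^j * (lam j - 1)) lam (Ev a) i"
    by (rule Top_cont[OF assms(1,3) Ev_ell2 Ev_ell2 Ev_conv])
  have e: "Top (\<lambda>j. 2^j * (lam j - 1)) lam (Ev (atr J a)) i = muJ lam J a * Ev (atr J a) i" for J
    using eig_fin[OF finite_atr, of lam J a i] by (simp add: muJ_atr)
  have ev: "(\<lambda>J. Ev (atr J a) i) \<longlonglongrightarrow> Ev a i"
  proof (rule Lim_transform_eventually[OF tendsto_const])
    show "\<forall>\<^sub>F J in sequentially. Ev a i = Ev (atr J a) i"
      using eventually_ge_at_top[of i] by eventually_elim (simp add: Ev_atr_eq)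
  qed
  have lim2: "(\<lambda>J. Top (\<lambda>j. 2^j * (lam j - 1)) lam (Ev (atr J a)) i) \<longlonglongrightarrow> mu lam a * Ev a i"
    unfolding e by (intro tendsto_mult muJ_conv assms ev)
  show "Top (\<lambda>j. 2^j * (lam j - 1)) lam (Ev a) i = mu lam a * Ev a i"
    by (rule LIMSEQ_unique[OF lim1 lim2])
qed



lemma tail_sum_le:
  fixes d :: "nat \<Rightarrow> real"
  assumes "\<And>j. 0 \<le> d j" "\<And>j. d (Suc j) \<le> d j / 4"
  shows "(\<Sum>i\<in>{Suc j..<Suc j + k}. d i) \<le> d j / 3"
proof -
  have "(\<Sum>i\<in>{Suc j..<Suc j + k}. d i) + 4/3 * d (Suc j + k) \<le> 4/3 * d (Suc j)"
  proof (induction k)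
    case 0 show ?case by simp
  next
    case (Suc k)
    have "(\<Sum>i\<in>{Suc j..<Suc j + Suc k}. d i) = (\<Sum>i\<in>{Suc j..<Suc j + k}. d i) + d (Suc j + k)"
      by (simp add: sum.atLeastLessThan_Suc)
    moreover have "d (Suc j + Suc k) \<le> d (Suc j + k) / 4" using assms(2)[of "Suc j + k"] by simp
    ultimately show ?case using Suc.IH by linarith
  qed
  moreover have "d (Suc j) \<le> d j / 4" by (rule assms(2))
  moreover have "0 \<le> d (Suc j + k)" by (rule assms(1))
  ultimately show ?thesis by linarith
qed

lemma muJ_sep:
  assumes u: "unim lam" and dd: "\<And>j. cmod (lam (Suc j) - 1) \<le> cmod (lam j - 1) / 4"
    and eq: "\<And>i. i < j \<Longrightarrow> a i = a' i" and aj: "a j" "\<not> a' j" and jJ: "j < J"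
  shows "cmod (lam j - 1) / 3 \<le> cmod (muJ lam J a - muJ lam J a')"
proof -
  define f where "f b i = (if b i then lam i else 1)" for b i
  define Q where "Q b = (\<Prod>i\<in>{Suc j..<J}. f b i)" for b
  define P where "P = (\<Prod>i<j. f a i)"
  have split: "muJ lam J b = (\<Prod>i<j. f b i) * f b j * Q b" for b
  proof -
    have "muJ lam J b = (\<Prod>i\<in>{..<Suc j} \<union> {Suc j..<J}. f b i)"
      unfolding muJ_def f_def by (rule prod.cong) (use jJ in auto)
    also have "\<dots> = (\<Prod>i<Suc j. f b i) * Q b"
      unfolding Q_def by (rule prod.union_disjoint) auto
    finally show ?thesis by simp
  qed
  have Pa': "(\<Prod>i<j. f a' i) = P" unfolding P_def f_def by (rule prod.cong) (auto simp: eq)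
  have nP: "cmod P = 1"
  proof -
    have "cmod (f a i) = 1" for i using u by (simp add: f_def unim_def)
    then show ?thesis by (simp add: P_def prod_norm[symmetric])
  qed
  have Qb: "cmod (Q b - 1) \<le> cmod (lam j - 1) / 3" for b
  proof -
    have "cmod (Q b - 1) = cmod ((\<Prod>i\<in>{Suc j..<J}. f b i) - (\<Prod>i\<in>{Suc j..<J}. 1))" by (simp add: Q_def)
    also have "\<dots> \<le> (\<Sum>i\<in>{Suc j..<J}. cmod (f b i - 1))"
      by (rule norm_prod_diff) (use u in \<open>auto simp: f_def unim_def\<close>)
    also have "\<dots> \<le> (\<Sum>i\<in>{Suc j..<J}. cmod (lam i - 1))"
      by (intro sum_mono) (simp add: f_def)
    also have "{Suc j..<J} = {Suc j..<Suc j + (J - Suc j)}" using jJ by auto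
    also have "(\<Sum>i\<in>{Suc j..<Suc j + (J - Suc j)}. cmod (lam i - 1)) \<le> cmod (lam j - 1) / 3"
      by (rule tail_sum_le[where d="\<lambda>i. cmod (lam i - 1)", OF _ dd]) simp
    finally show ?thesis .
  qed
  have nl: "cmod (lam j) = 1" using u by (simp add: unim_def)
  have diff: "muJ lam J a - muJ lam J a' = P * (lam j * Q a - Q a')"
    using split[of a] split[of a'] aj Pa' P_def by (simp add: f_def algebra_simps)
  have "lam j - 1 = (lam j * Q a - Q a') - lam j * (Q a - 1) + (Q a' - 1)" by (simp add: algebra_simps)
  then have "cmod (lam j - 1) \<le> cmod (lam j * Q a - Q a' - lam j * (Q a - 1)) + cmod (Q a' - 1)"
    by (metis norm_triangle_ineq)
  also have "\<dots> \<le> cmod (lam j * Q a - Q a') + cmod (lam j * (Q a - 1)) + cmod (Q a' - 1)"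
    using norm_triangle_ineq4 by simp
  also have "\<dots> \<le> cmod (lam j * Q a - Q a') + cmod (lam j - 1) / 3 + cmod (lam j - 1) / 3"
    using Qb[of a] Qb[of a'] by (simp add: norm_mult nl)
  finally have "cmod (lam j - 1) / 3 \<le> cmod (lam j * Q a - Q a')" by simp
  also have "\<dots> = cmod (muJ lam J a - muJ lam J a')" by (simp add: diff norm_mult nP)
  finally show ?thesis .
qed

lemma mu_sep:
  assumes u: "unim lam" and s: "summable (\<lambda>j. cmod (lam j - 1))"
    and dd: "\<And>j. cmod (lam (Suc j) - 1) \<le> cmod (lam j - 1) / 4"
    and eq: "\<And>i. i < j \<Longrightarrow> a i = a' i" and aj: "a j" "\<not> a' j"
  shows "cmod (lam j - 1) / 3 \<le> cmod (mu lam a - mu lam a')"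
proof (rule LIMSEQ_le_const)
  show "(\<lambda>J. cmod (muJ lam J a - muJ lam J a')) \<longlonglongrightarrow> cmod (mu lam a - mu lam a')"
    by (intro tendsto_norm tendsto_diff muJ_conv u s)
  show "\<exists>N. \<forall>J\<ge>N. cmod (lam j - 1) / 3 \<le> cmod (muJ lam J a - muJ lam J a')"
    by (intro exI[of _ "Suc j"] allI impI muJ_sep[where lam=lam and j=j and a=a and a'=a', OF u dd eq aj]) auto
qed

lemma mu_inj:
  assumes u: "unim lam" and s: "summable (\<lambda>j. cmod (lam j - 1))"
    and dd: "\<And>j. cmod (lam (Suc j) - 1) \<le> cmod (lam j - 1) / 4"
    and ne: "\<And>j. lam j \<noteq> 1"
  shows "inj (mu lam)"
proof (rule injI, rule ccontr)
  fix a a' assume e: "mu lam a = mu lam a'" and ne2: "a \<noteq> a'"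
  then obtain j0 where "a j0 \<noteq> a' j0" by auto
  define j where "j = (LEAST j. a j \<noteq> a' j)"
  have j: "a j \<noteq> a' j" unfolding j_def by (rule LeastI[of _ j0]) fact
  have eqb: "\<And>i. i < j \<Longrightarrow> a i = a' i" unfolding j_def using not_less_Least by blast
  have pos: "0 < cmod (lam j - 1) / 3" using ne[of j] by simp
  show False
  proof (cases "a j")
    case True
    then show False using mu_sep[where lam=lam and j=j and a=a and a'=a', OF u s dd eqb True] j e pos by simp
  next
    case False
    then have "a' j" using j by simp
    then show False using mu_sep[where lam=lam and j=j and a=a' and a'=a, OF u s dd] eqb j e pos False by (simp add: norm_minus_commute)
  qed
qed

abbreviation Bm :: "bool measure" where "Bm \<equiv> measure_pmf (bernoulli_pmf (1/2))"

definition Pm :: "(nat \<Rightarrow> bool) measure" where "Pm = PiM UNIV (\<lambda>_. Bm)"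

definition cyl :: "nat \<Rightarrow> (nat \<Rightarrow> bool) \<Rightarrow> (nat \<Rightarrow> bool) set" where
  "cyl J b = prod_emb UNIV (\<lambda>_. Bm) {..<J} (PiE {..<J} (\<lambda>j. {b j}))"

lemma space_Pm: "space Pm = UNIV" by (simp add: Pm_def space_PiM)

lemma prob_Pm: "prob_space Pm"
  unfolding Pm_def by (rule prob_space_PiM) (simp add: prob_space_measure_pmf)

lemma cyl_mem: "a \<in> cyl J b \<longleftrightarrow> (\<forall>j<J. a j = b j)"
  by (auto simp: cyl_def prod_emb_def PiE_iff space_PiM)

lemma cyl_sets: "cyl J b \<in> sets Pm"
  unfolding cyl_def Pm_def by (rule sets_PiM_I) auto

lemma cyl_measure: "emeasure Pm (cyl J b) = ennreal ((1/2)^J)"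
proof -
  have "emeasure Pm (cyl J b) = (\<Prod>j<J. emeasure Bm {b j})"
    unfolding Pm_def cyl_def by (rule emeasure_PiM_emb) (auto simp: prob_space_measure_pmf)
  also have "\<dots> = (\<Prod>j<J. ennreal (1/2))"
    by (intro prod.cong refl) (auto simp: emeasure_pmf_single pmf_bernoulli_False)
  also have "\<dots> = ennreal (1/2) ^ J" by (simp only: prod_constant card_lessThan)
  also have "\<dots> = ennreal ((1/2)^J)" by (rule ennreal_power) simp
  finally show ?thesis .
qed

lemma muJ_meas: "muJ lam J \<in> borel_measurable Pm"
proof -
  have "(\<lambda>a. if a j then lam j else 1) \<in> borel_measurable Pm" for j
  proof -
    have "(\<lambda>a::nat \<Rightarrow> bool. a j) \<in> measurable Pm Bm"
      unfolding Pm_def by (rule measurable_component_singleton) simp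
    moreover have "(\<lambda>b::bool. if b then lam j else 1) \<in> borel_measurable Bm" by simp
    ultimately show ?thesis using measurable_compose by fastforce
  qed
  then show ?thesis unfolding muJ_def by (intro borel_measurable_prod) auto
qed

lemma mu_meas:
  assumes "unim lam" "summable (\<lambda>j. cmod (lam j - 1))"
  shows "mu lam \<in> borel_measurable Pm"
  by (rule borel_measurable_LIMSEQ_metric[OF muJ_meas muJ_conv[OF assms]])



lemma sum_ell2: "finite F \<Longrightarrow> F \<subseteq> ell2 \<Longrightarrow> (\<lambda>i. \<Sum>v\<in>F. c v * v i) \<in> ell2"
proof (induction F rule: finite_induct)
  case empty then show ?case by (simp add: ell2_zero)
next
  case (insert w F)
  then have "(\<lambda>i. c w * w i) \<in> ell2" using ell2_scale by auto
  with insert show ?case using ell2_add[of "\<lambda>i. c w * w i" "\<lambda>i. \<Sum>v\<in>F. c v * v i"] by simp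
qed

lemma cspan_ell2_sub: "S \<subseteq> ell2 \<Longrightarrow> y \<in> cspan_ell2 S \<Longrightarrow> y \<in> ell2"
  unfolding cspan_ell2_def using sum_ell2 by blast

lemma cspan_mem: "v \<in> S \<Longrightarrow> v \<in> cspan_ell2 S"
  unfolding cspan_ell2_def by (rule CollectI, rule exI[of _ "{v}"], rule exI[of _ "\<lambda>_. 1"]) simp

lemma cspan_add:
  assumes "y1 \<in> cspan_ell2 S" "y2 \<in> cspan_ell2 S"
  shows "(\<lambda>i. y1 i + y2 i) \<in> cspan_ell2 S"
proof -
  obtain F1 c1 where 1: "y1 = (\<lambda>i. \<Sum>v\<in>F1. c1 v * v i)" "finite F1" "F1 \<subseteq> S"
    using assms(1) unfolding cspan_ell2_def by blast
  obtain F2 c2 where 2: "y2 = (\<lambda>i. \<Sum>v\<in>F2. c2 v * v i)" "finite F2" "F2 \<subseteq> S"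
    using assms(2) unfolding cspan_ell2_def by blast
  define c where "c v = (if v \<in> F1 then c1 v else 0) + (if v \<in> F2 then c2 v else 0)" for v
  have "(\<lambda>i. y1 i + y2 i) = (\<lambda>i. \<Sum>v\<in>F1 \<union> F2. c v * v i)"
  proof
    fix i
    have "(\<Sum>v\<in>F1 \<union> F2. c v * v i) = (\<Sum>v\<in>F1 \<union> F2. (if v \<in> F1 then c1 v * v i else 0))
        + (\<Sum>v\<in>F1 \<union> F2. (if v \<in> F2 then c2 v * v i else 0))"
    proof -
      have t: "c v * v i = (if v \<in> F1 then c1 v * v i else 0) + (if v \<in> F2 then c2 v * v i else 0)" for v
        by (simp add: c_def distrib_right)
      show ?thesis by (simp only: t sum.distrib)
    qed
    also have "\<dots> = (\<Sum>v\<in>F1. c1 v * v i) + (\<Sum>v\<in>F2. c2 v * v i)"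
      using 1(2) 2(2) by (simp add: sum.inter_restrict[symmetric] Int_absorb1 Int_absorb2)
    finally show "y1 i + y2 i = (\<Sum>v\<in>F1 \<union> F2. c v * v i)" by (simp add: 1 2)
  qed
  then show ?thesis unfolding cspan_ell2_def using 1 2 by blast
qed

lemma cspan_scale:
  assumes "y \<in> cspan_ell2 S" shows "(\<lambda>i. a * y i) \<in> cspan_ell2 S"
proof -
  obtain F c where 1: "y = (\<lambda>i. \<Sum>v\<in>F. c v * v i)" "finite F" "F \<subseteq> S"
    using assms(1) unfolding cspan_ell2_def by blast
  have e: "(\<lambda>i. a * y i) = (\<lambda>i. \<Sum>v\<in>F. (a * c v) * v i)"
    by (simp add: 1 sum_distrib_left mult.assoc)
  show ?thesis unfolding cspan_ell2_def using 1(2,3) e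
    by (intro CollectI exI[of _ F] exI[of _ "\<lambda>v. a * c v"]) simp
qed

lemma ell2_norm_sym: "ell2_norm (\<lambda>m. x m - y m) = ell2_norm (\<lambda>m. y m - x m)"
  by (simp add: ell2_norm_def norm_minus_commute)

lemma tri3:
  assumes "x \<in> ell2" "y \<in> ell2" "z \<in> ell2"
  shows "ell2_norm (\<lambda>i. x i - z i) \<le> ell2_norm (\<lambda>i. x i - y i) + ell2_norm (\<lambda>i. y i - z i)"
  using ell2_add[OF ell2_diff[OF assms(1,2)] ell2_diff[OF assms(2,3)]] by simp

lemma cs_sub: "S \<subseteq> ell2 \<Longrightarrow> y \<in> cspan_ell2 S \<Longrightarrow> y \<in> closed_span_ell2 S"
  unfolding closed_span_ell2_def using cspan_ell2_sub[of S y] by (auto simp: ell2_norm_zero intro!: bexI[of _ y])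

lemma cs_ell2: "x \<in> closed_span_ell2 S \<Longrightarrow> x \<in> ell2"
  by (simp add: closed_span_ell2_def)

lemma cs_approx:
  assumes S: "S \<subseteq> ell2" and x: "x \<in> ell2"
    and ap: "\<And>e. e > 0 \<Longrightarrow> \<exists>y\<in>closed_span_ell2 S. ell2_norm (\<lambda>i. x i - y i) < e"
  shows "x \<in> closed_span_ell2 S"
  unfolding closed_span_ell2_def
proof (intro CollectI conjI x allI impI)
  fix e :: real assume e: "e > 0"
  obtain y where y: "y \<in> closed_span_ell2 S" "ell2_norm (\<lambda>i. x i - y i) < e/2" using ap[of "e/2"] e by auto
  obtain z where z: "z \<in> cspan_ell2 S" "ell2_norm (\<lambda>i. y i - z i) < e/2"
    using y(1) e unfolding closed_span_ell2_def by (auto dest!: spec[of _ "e/2"])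
  have "ell2_norm (\<lambda>i. x i - z i) \<le> ell2_norm (\<lambda>i. x i - y i) + ell2_norm (\<lambda>i. y i - z i)"
    by (rule tri3[OF x cs_ell2[OF y(1)] cspan_ell2_sub[OF S z(1)]])
  with y z show "\<exists>z\<in>cspan_ell2 S. ell2_norm (\<lambda>i. x i - z i) < e" by (intro bexI[OF _ z(1)]) simp
qed

lemma cs_add:
  assumes S: "S \<subseteq> ell2" and x: "x \<in> closed_span_ell2 S" and y: "y \<in> closed_span_ell2 S"
  shows "(\<lambda>i. x i + y i) \<in> closed_span_ell2 S"
  unfolding closed_span_ell2_def
proof (intro CollectI conjI allI impI)
  show "(\<lambda>i. x i + y i) \<in> ell2" using ell2_add[OF cs_ell2[OF x] cs_ell2[OF y]] by simp
  fix e :: real assume e: "e > 0"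
  obtain z1 where z1: "z1 \<in> cspan_ell2 S" "ell2_norm (\<lambda>i. x i - z1 i) < e/2"
    using x e unfolding closed_span_ell2_def by (auto dest!: spec[of _ "e/2"])
  obtain z2 where z2: "z2 \<in> cspan_ell2 S" "ell2_norm (\<lambda>i. y i - z2 i) < e/2"
    using y e unfolding closed_span_ell2_def by (auto dest!: spec[of _ "e/2"])
  have "ell2_norm (\<lambda>i. x i + y i - (z1 i + z2 i)) \<le> ell2_norm (\<lambda>i. x i - z1 i) + ell2_norm (\<lambda>i. y i - z2 i)"
    using ell2_add[OF ell2_diff[OF cs_ell2[OF x] cspan_ell2_sub[OF S z1(1)]] ell2_diff[OF cs_ell2[OF y] cspan_ell2_sub[OF S z2(1)]]]
    by (simp add: algebra_simps)
  then show "\<exists>z\<in>cspan_ell2 S. ell2_norm (\<lambda>i. x i + y i - z i) < e"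
    using z1 z2 by (intro bexI[OF _ cspan_add[OF z1(1) z2(1)]]) simp
qed

lemma cs_scale:
  assumes S: "S \<subseteq> ell2" and x: "x \<in> closed_span_ell2 S"
  shows "(\<lambda>i. a * x i) \<in> closed_span_ell2 S"
  unfolding closed_span_ell2_def
proof (intro CollectI conjI allI impI)
  show "(\<lambda>i. a * x i) \<in> ell2" using ell2_scale[OF cs_ell2[OF x]] by simp
  fix e :: real assume e: "e > 0"
  have ca: "cmod a + 1 > 0" by (smt (verit) norm_ge_zero)
  have e': "e / (cmod a + 1) > 0" using e ca by simp
  obtain z where z: "z \<in> cspan_ell2 S" "ell2_norm (\<lambda>i. x i - z i) < e / (cmod a + 1)"
    using x e' unfolding closed_span_ell2_def by (auto dest!: spec[of _ "e / (cmod a + 1)"])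
  have zl: "z \<in> ell2" by (rule cspan_ell2_sub[OF S z(1)])
  have "(\<lambda>i. a * x i - a * z i) = (\<lambda>i. a * (x i - z i))" by (simp add: algebra_simps)
  then have "ell2_norm (\<lambda>i. a * x i - a * z i) = cmod a * ell2_norm (\<lambda>i. x i - z i)"
    using ell2_scale[OF ell2_diff[OF cs_ell2[OF x] zl], of a] by simp
  also have "\<dots> \<le> (cmod a + 1) * ell2_norm (\<lambda>i. x i - z i)"
    by (intro mult_right_mono ell2_norm_nonneg ell2_diff[OF cs_ell2[OF x] zl]) simp
  also have "\<dots> < (cmod a + 1) * (e / (cmod a + 1))"
    by (intro mult_strict_left_mono z(2) ca)
  also have "\<dots> = e" using ca by simp
  finally show "\<exists>z\<in>cspan_ell2 S. ell2_norm (\<lambda>i. a * x i - z i) < e"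
    by (intro bexI[OF _ cspan_scale[OF z(1)]])
qed

lemma cs_zero: "(\<lambda>i. 0) \<in> closed_span_ell2 S"
  unfolding closed_span_ell2_def cspan_ell2_def
  by (auto simp: ell2_zero ell2_norm_zero intro!: exI[of _ "{}"])

lemma cs_sum:
  assumes S: "S \<subseteq> ell2" and "finite K" and "\<And>k. k \<in> K \<Longrightarrow> f k \<in> closed_span_ell2 S"
  shows "(\<lambda>i. \<Sum>k\<in>K. a k * f k i) \<in> closed_span_ell2 S"
  using assms(2,3)
proof (induction K rule: finite_induct)
  case empty then show ?case by (simp add: cs_zero)
next
  case (insert k K)
  have "(\<lambda>i. a k * f k i) \<in> closed_span_ell2 S" by (rule cs_scale[OF S insert.prems]) simp
  from cs_add[OF S this insert.IH] insert show ?case by simp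
qed



lemma ennreal_contra:
  assumes "1 + ennreal r \<le> 1" "r > 0" shows False
proof -
  have "ennreal (1 + r) \<le> ennreal 1" using assms by (simp add: ennreal_plus)
  then have "1 + r \<le> 1" by (subst (asm) ennreal_le_iff) (use assms in auto)
  with assms show False by simp
qed

lemma exists_in_cyl:
  assumes A: "A \<in> sets Pm" "emeasure Pm A = 1"
  shows "\<exists>a\<in>A. a \<in> cyl J b"
proof (rule ccontr)
  assume "\<not> ?thesis" then have d: "A \<inter> cyl J b = {}" by auto
  have "emeasure Pm A + emeasure Pm (cyl J b) = emeasure Pm (A \<union> cyl J b)"
    by (rule plus_emeasure[OF A(1) cyl_sets d])
  also have "\<dots> \<le> emeasure Pm (space Pm)" by (rule emeasure_space)
  also have "\<dots> = 1" using prob_Pm by (simp add: prob_space.emeasure_space_1)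
  finally have "1 + ennreal ((1/2)^J) \<le> 1" using A(2) cyl_measure by simp
  then show False by (rule ennreal_contra) simp
qed

lemma ev_lt:
  fixes f :: "nat \<Rightarrow> real"
  assumes "f \<longlonglongrightarrow> 0" "e > 0" shows "\<exists>N. \<forall>n\<ge>N. f n < e"
  using order_tendstoD(2)[OF assms] by (simp add: eventually_sequentially)

lemma span_main:
  assumes u: "unim lam" and s: "summable (\<lambda>j. cmod (lam j - 1))" and K: "Kb (\<lambda>j. 2^j * (lam j - 1)) K"
    and B: "B \<in> sets borel" "emeasure (distr Pm borel (mu lam)) B = 1"
  shows "closed_span_ell2 (\<Union>l\<in>B. eigenspace_ell2 (Top (\<lambda>j. 2^j * (lam j - 1)) lam) l) = ell2"
proof -
  define T where "T = Top (\<lambda>j. 2^j * (lam j - 1)) lam"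
  define S where "S = (\<Union>l\<in>B. eigenspace_ell2 T l)"
  have S: "S \<subseteq> ell2" by (auto simp: S_def eigenspace_ell2_def)
  have meas: "mu lam \<in> measurable Pm borel" by (rule mu_meas[OF u s])
  define A where "A = mu lam -` B \<inter> space Pm"
  have Asets: "A \<in> sets Pm" unfolding A_def by (rule measurable_sets[OF meas B(1)])
  have A1: "emeasure Pm A = 1" using B(2) by (simp add: emeasure_distr[OF meas B(1)] A_def)
  have EvS: "Ev a \<in> S" if "a \<in> A" for a
  proof -
    have "mu lam a \<in> B" using that by (simp add: A_def)
    moreover have "Ev a \<in> eigenspace_ell2 T (mu lam a)"
      by (simp add: eigenspace_ell2_def Ev_ell2 T_def eig[OF u s K])
    ultimately show ?thesis by (auto simp: S_def)
  qed
  have EvR: "Ev (\<lambda>j. j \<in> R) \<in> closed_span_ell2 S" if R: "finite R" for R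
  proof (rule cs_approx[OF S Ev_ell2])
    fix e :: real assume e: "e > 0"
    obtain N where N: "R \<subseteq> {..<N}" using R by (auto simp: finite_nat_set_iff_bounded)
    obtain J0 where J0: "\<forall>J\<ge>J0. sqrt (\<Sum>m. if m < J then 0 else Wt m) < e"
      using ev_lt[OF Ev_approx_tendsto e] by blast
    define J where "J = max N J0"
    obtain a where a: "a \<in> A" "a \<in> cyl J (\<lambda>j. j \<in> R)" using exists_in_cyl[OF Asets A1] by blast
    have at: "atr J a = (\<lambda>j. j \<in> R)"
    proof
      fix j show "atr J a j = (j \<in> R)"
        using a(2) N by (cases "j < J") (auto simp: atr_def cyl_mem J_def)
    qed
    have "ell2_norm (\<lambda>i. Ev (\<lambda>j. j \<in> R) i - Ev a i) = ell2_norm (\<lambda>m. Ev a m - Ev (atr J a) m)"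
      by (simp add: at ell2_norm_sym)
    also have "\<dots> \<le> sqrt (\<Sum>m. if m < J then 0 else Wt m)" by (rule Ev_approx)
    also have "\<dots> < e" using J0 J_def by simp
    finally show "\<exists>y\<in>closed_span_ell2 S. ell2_norm (\<lambda>i. Ev (\<lambda>j. j \<in> R) i - y i) < e"
      using cs_sub[OF S cspan_mem[OF EvS[OF a(1)]]] by blast
  qed
  have delta: "(\<lambda>m. if m = k then 1 else 0) \<in> closed_span_ell2 S" for k
  proof -
    define G :: "nat \<Rightarrow> complex" where "G = (\<lambda>j. - (2 ^ j))"
    define H :: "nat \<Rightarrow> complex" where "H = (\<lambda>j. 2 ^ j)"
    have eq: "(\<lambda>m. if m = k then 1 else 0) = (\<lambda>m. \<Sum>r\<in>{..k}. Mx G H r k * Ev (\<lambda>j. j \<in> bits r) m)"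
    proof
      fix m
      have ev: "Ev (\<lambda>j. j \<in> bits r) m = Mx (\<lambda>_. 1) wv m r" for r
        using Ev_fin_Mx[of "\<lambda>j. j \<in> bits r" m] by simp
      have "(\<Sum>r\<in>{..k}. Mx G H r k * Ev (\<lambda>j. j \<in> bits r) m) = (\<Sum>r. Mx (\<lambda>_. 1) wv m r * Mx G H r k)"
        by (subst suminf_finite[of "{..k}"]) (auto simp: ev mult.commute dest: Mx_le_idx)
      also have "\<dots> = Mx (\<lambda>j. 1 * H j + G j) (\<lambda>j. wv j * H j) m k" by (rule Mx_prod)
      also have "(\<lambda>j. 1 * H j + G j) = (\<lambda>_. 0)" by (simp add: G_def H_def)
      also have "(\<lambda>j. wv j * H j) = (\<lambda>_. 1)" using two_wv by (simp add: H_def mult.commute)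
      finally show "(if m = k then 1 else 0) = (\<Sum>r\<in>{..k}. Mx G H r k * Ev (\<lambda>j. j \<in> bits r) m)"
        by (simp add: Mx_id)
    qed
    show ?thesis unfolding eq by (rule cs_sum[OF S]) (auto intro: EvR)
  qed
  have trm: "tr N x \<in> closed_span_ell2 S" for N x
  proof -
    have "tr N x = (\<lambda>m. \<Sum>k\<in>{..<N}. x k * (if m = k then 1 else 0))"
    proof
      fix m
      have "x k * (if m = k then 1 else 0) = (if k = m then x k else 0)" for k by auto
      then show "tr N x m = (\<Sum>k\<in>{..<N}. x k * (if m = k then 1 else 0))"
        by (simp add: tr_def)
    qed
    then show ?thesis using cs_sum[OF S, of "{..<N}" "\<lambda>k m. if m = k then 1 else 0" x] delta by simp
  qed
  have "x \<in> closed_span_ell2 S" if x: "x \<in> ell2" for x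
  proof (rule cs_approx[OF S x])
    fix e :: real assume "e > 0"
    then obtain N where "\<forall>n\<ge>N. ell2_norm (\<lambda>m. x m - tr n x m) < e" using ev_lt[OF tr_conv[OF x]] by blast
    then show "\<exists>y\<in>closed_span_ell2 S. ell2_norm (\<lambda>i. x i - y i) < e" using trm by blast
  qed
  then show ?thesis using cs_ell2 unfolding S_def T_def by blast
qed



primrec lseq :: "(real \<Rightarrow> complex \<Rightarrow> bool) \<Rightarrow> (nat \<Rightarrow> real) \<Rightarrow> nat \<Rightarrow> complex" where
  "lseq Q eps 0 = (SOME l. Q (eps 0) l)"
| "lseq Q eps (Suc j) = (SOME l. Q (min (eps (Suc j)) (cmod (lseq Q eps j - 1) / 4)) l)"

lemma lseq_0:
  assumes ex: "\<And>e. e > 0 \<Longrightarrow> \<exists>l. Q e l" and "eps 0 > 0"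
  shows "Q (eps 0) (lseq Q eps 0)"
  using someI_ex[OF ex[OF assms(2)]] by simp

lemma lseq_Suc:
  assumes ex: "\<And>e. e > 0 \<Longrightarrow> \<exists>l. Q e l" and "eps (Suc j) > 0" and "lseq Q eps j \<noteq> 1"
  shows "Q (min (eps (Suc j)) (cmod (lseq Q eps j - 1) / 4)) (lseq Q eps (Suc j))"
proof -
  have "min (eps (Suc j)) (cmod (lseq Q eps j - 1) / 4) > 0" using assms(2,3) by simp
  from someI_ex[OF ex[OF this]] show ?thesis by simp
qed

lemma lseq_ne:
  assumes ex: "\<And>e. e > 0 \<Longrightarrow> \<exists>l. Q e l" and pos: "\<And>e l. Q e l \<Longrightarrow> l \<noteq> 1" and eps: "\<And>j. eps j > 0"
  shows "lseq Q eps j \<noteq> 1"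
proof (induction j)
  case 0 show ?case using pos[OF lseq_0[OF ex eps]] .
next
  case (Suc j) show ?case using pos[OF lseq_Suc[OF ex eps Suc]] .
qed

lemma uncountable_nat_bool: "uncountable (UNIV :: (nat \<Rightarrow> bool) set)"
  unfolding uncountable_def
proof (intro conjI notI)
  show "(UNIV :: (nat \<Rightarrow> bool) set) = {} \<Longrightarrow> False" by simp
next
  assume "\<exists>f::nat \<Rightarrow> nat \<Rightarrow> bool. range f = UNIV"
  then obtain f :: "nat \<Rightarrow> nat \<Rightarrow> bool" where f: "range f = UNIV" by blast
  have "(\<lambda>n. \<not> f n n) \<in> range f" using f by simp
  then obtain m where "(\<lambda>n. \<not> f n n) = f m" by blast
  then have "\<not> f m m = f m m" by (metis)
  then show False by simp
qed

lemma pow_diff_le: "cmod l = 1 \<Longrightarrow> cmod (l ^ n - 1) \<le> real n * cmod (l - 1)"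
proof (induction n)
  case 0 then show ?case by simp
next
  case (Suc n)
  have "l ^ Suc n - 1 = l * (l ^ n - 1) + (l - 1)" by (simp add: algebra_simps)
  then have "cmod (l ^ Suc n - 1) \<le> cmod (l * (l ^ n - 1)) + cmod (l - 1)" by (metis norm_triangle_ineq)
  also have "\<dots> = cmod (l ^ n - 1) + cmod (l - 1)" using Suc.prems by (simp add: norm_mult)
  also have "\<dots> \<le> real n * cmod (l - 1) + cmod (l - 1)" using Suc by simp
  finally show ?case by (simp add: algebra_simps)
qed

lemma half_pow: "(2::real)^j * (1/2)^(2*j+1) = (1/2)^(j+1)"
proof -
  have "(1/2::real)^(2*j+1) = (1/2)^j * (1/2)^(j+1)" by (simp add: power_add[symmetric] mult_2)
  moreover have "(2::real)^j * (1/2)^j = 1" by (simp add: power_mult_distrib[symmetric])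
  ultimately show ?thesis by (metis mult.assoc mult_1)
qed



theorem theorem2p1:
  fixes n :: "nat \<Rightarrow> nat"
  assumes "strict_mono n"
    and "n 0 = 1"
    and "\<forall>k. n k > 0"
    and "\<forall>\<epsilon>>0. \<exists>l::complex. cmod l = 1 \<and> l \<noteq> 1 \<and>
                  (\<forall>k. cmod (l ^ n k - 1) \<le> \<epsilon>)"
  shows "\<forall>\<delta>>(0::real). \<exists>T. bounded_op_ell2 T \<and> perfectly_spanning_unimodular T \<and>
           (\<forall>k. op_norm_ell2 (T ^^ n k) \<le> 1 + \<delta>) \<and>
           uncountable (point_spectrum_ell2 T \<inter> sphere 0 1)"
proof (intro allI impI)
  fix \<delta> :: real assume \<delta>: "\<delta> > 0"
  define s where "s = ln (1 + \<delta>)"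
  have s: "s > 0" "exp s = 1 + \<delta>" using \<delta> by (auto simp: s_def)
  define eps where "eps j = s * (1/2)^(2*j+1)" for j
  have eps: "eps j > 0" for j using s by (simp add: eps_def)
  define Q where "Q e l \<longleftrightarrow> cmod l = 1 \<and> l \<noteq> 1 \<and> (\<forall>k. cmod (l ^ n k - 1) \<le> e)" for e l
  have ex: "\<exists>l. Q e l" if "e > 0" for e using assms(4) that by (simp add: Q_def)
  have pos: "l \<noteq> 1" if "Q e l" for e l using that by (simp add: Q_def)
  define lam where "lam = lseq Q eps"
  have ne: "lam j \<noteq> 1" for j unfolding lam_def by (rule lseq_ne[OF ex pos eps])
  have Qj: "Q (eps j) (lam j)" for j
  proof (cases j)
    case 0 then show ?thesis using lseq_0[OF ex eps] by (simp add: lam_def)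
  next
    case (Suc i)
    have "Q (min (eps (Suc i)) (cmod (lam i - 1) / 4)) (lam (Suc i))"
      unfolding lam_def by (rule lseq_Suc[OF ex eps ne[unfolded lam_def]])
    then show ?thesis using Suc by (auto simp: Q_def intro: order_trans)
  qed
  have u: "unim lam" using Qj by (simp add: unim_def Q_def)
  have ulam: "cmod (lam j) = 1" for j using u by (simp add: unim_def)
  have pk: "cmod (lam j ^ n k - 1) \<le> eps j" for j k using Qj[of j] by (simp add: Q_def)
  have d1: "cmod (lam j - 1) \<le> eps j" for j using pk[of j 0] assms(2) by simp
  have dd: "cmod (lam (Suc j) - 1) \<le> cmod (lam j - 1) / 4" for j
  proof -
    have "Q (min (eps (Suc j)) (cmod (lam j - 1) / 4)) (lam (Suc j))"
      unfolding lam_def by (rule lseq_Suc[OF ex eps ne[unfolded lam_def]])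
    then have "cmod (lam (Suc j) ^ n 0 - 1) \<le> cmod (lam j - 1) / 4" by (simp add: Q_def)
    then show ?thesis using assms(2) by simp
  qed
  have sl: "summable (\<lambda>j. cmod (lam j - 1))"
  proof (rule summable_comparison_test'[of eps])
    have "summable (\<lambda>j. (s/2) * (1/4::real)^j)" by (intro summable_mult summable_geometric) simp
    moreover have "eps = (\<lambda>j. (s/2) * (1/4::real)^j)"
      by (auto simp: eps_def fun_eq_iff power_add power_mult power2_eq_square)
    ultimately show "summable eps" by simp
  qed (use d1 in simp)
  have gb: "cmod (2^j * (lam j ^ m - 1)) \<le> (real m * s) * (1/2)^(j+1)" for j m
  proof -
    have "cmod (2^j * (lam j ^ m - 1)) = 2^j * cmod (lam j ^ m - 1)" by (simp add: norm_mult norm_power)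
    also have "\<dots> \<le> 2^j * (real m * eps j)"
      using order_trans[OF pow_diff_le[OF ulam] mult_left_mono[OF d1]] by (simp)
    also have "\<dots> = (real m * s) * ((2::real)^j * (1/2)^(2*j+1))" by (simp add: eps_def)
    also have "\<dots> = (real m * s) * (1/2)^(j+1)" by (simp only: half_pow)
    finally show ?thesis .
  qed
  have Kbn: "Kb (\<lambda>j. 2^j * (lam j ^ m - 1)) (exp (real m * s))" for m
    by (rule Kb_geom[OF gb]) (use s in simp)
  have Kc: "Kb (\<lambda>j. 2^j * (lam j - 1)) (exp s)" using Kbn[of 1] by simp
  have Kk: "Kb (\<lambda>j. 2^j * (lam j ^ n k - 1)) (exp s)" for k
  proof (rule Kb_geom)
    fix j
    have "cmod (2^j * (lam j ^ n k - 1)) = 2^j * cmod (lam j ^ n k - 1)" by (simp add: norm_mult norm_power)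
    also have "\<dots> \<le> 2^j * eps j" by (intro mult_left_mono pk) simp
    also have "\<dots> = s * ((2::real)^j * (1/2)^(2*j+1))" by (simp add: eps_def)
    also have "\<dots> = s * (1/2)^(j+1)" by (simp only: half_pow)
    finally show "cmod (2^j * (lam j ^ n k - 1)) \<le> s * (1/2)^(j+1)" .
  qed (use s in simp)
  define T where "T = Top (\<lambda>j. 2^j * (lam j - 1)) lam"
  have powT: "(T ^^ m) x = Top (\<lambda>j. 2^j * (lam j ^ m - 1)) (\<lambda>j. lam j ^ m) x" if "x \<in> ell2" for m x
    unfolding T_def using Top_pow[of lam "\<lambda>j. 2^j", OF u _ that] Kbn by blast
  have meas: "mu lam \<in> measurable Pm borel" by (rule mu_meas[OF u sl])
  have inj: "inj (mu lam)" by (rule mu_inj[OF u sl dd ne])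
  have musph: "mu lam a \<in> sphere 0 1" for a using mu_norm[OF u sl] by simp
  have EvT: "Ev a \<in> eigenspace_ell2 T (mu lam a)" for a
    by (simp add: eigenspace_ell2_def Ev_ell2 T_def eig[OF u sl Kc])
  have Ev0: "Ev a \<noteq> (\<lambda>i. 0)" for a
  proof
    assume "Ev a = (\<lambda>i. 0)"
    then have "Ev a 0 = 0" by simp
    then show False by (simp add: Ev_def)
  qed
  show "\<exists>T. bounded_op_ell2 T \<and> perfectly_spanning_unimodular T \<and>
           (\<forall>k. op_norm_ell2 (T ^^ n k) \<le> 1 + \<delta>) \<and>
           uncountable (point_spectrum_ell2 T \<inter> sphere 0 1)"
  proof (intro exI[of _ T] conjI allI)
    show "bounded_op_ell2 T"
      unfolding bounded_op_ell2_def T_def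
      using Top_ell2[OF u Kc] Top_add[OF u Kc] Top_scale[OF u Kc] by blast
  next
    fix k
    show "op_norm_ell2 (T ^^ n k) \<le> 1 + \<delta>"
      unfolding op_norm_ell2_def
    proof (rule cSup_least)
      show "{ell2_norm ((T ^^ n k) x) |x. x \<in> ell2 \<and> ell2_norm x \<le> 1} \<noteq> {}"
        using ell2_zero ell2_norm_zero by fastforce
    next
      fix r assume "r \<in> {ell2_norm ((T ^^ n k) x) |x. x \<in> ell2 \<and> ell2_norm x \<le> 1}"
      then obtain x where x: "x \<in> ell2" "ell2_norm x \<le> 1" "r = ell2_norm ((T ^^ n k) x)" by blast
      have "r \<le> exp s * ell2_norm x"
        using Top_ell2[OF unim_pow[OF u] Kk x(1)] by (simp add: x(3) powT[OF x(1)])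
      also have "\<dots> \<le> exp s" using x(2) by simp
      finally show "r \<le> 1 + \<delta>" using s by simp
    qed
  next
    show "uncountable (point_spectrum_ell2 T \<inter> sphere 0 1)"
    proof
      assume c: "countable (point_spectrum_ell2 T \<inter> sphere 0 1)"
      have "range (mu lam) \<subseteq> point_spectrum_ell2 T \<inter> sphere 0 1"
        using EvT Ev0 musph by (auto simp: point_spectrum_ell2_def)
      then have "countable (range (mu lam))" using c countable_subset by blast
      moreover have "uncountable (range (mu lam))"
        by (rule uncountable_bij_betw[OF bij_betw_inv_into[OF inj_on_imp_bij_betw[OF inj]] uncountable_nat_bool])
      ultimately show False by simp
    qed
  next
    show "perfectly_spanning_unimodular T"
      unfolding perfectly_spanning_unimodular_def
    proof (intro exI[of _ "distr Pm borel (mu lam)"] conjI allI impI)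
      show "sets (distr Pm borel (mu lam)) = sets borel" by simp
      show "prob_space (distr Pm borel (mu lam))"
        by (rule prob_space.prob_space_distr[OF prob_Pm meas])
      have "emeasure (distr Pm borel (mu lam)) (sphere 0 1) = emeasure Pm (mu lam -` sphere 0 1 \<inter> space Pm)"
        by (rule emeasure_distr[OF meas]) simp
      also have "mu lam -` sphere 0 1 \<inter> space Pm = space Pm" using musph by auto
      also have "emeasure Pm (space Pm) = 1" using prob_Pm by (simp add: prob_space.emeasure_space_1)
      finally show "emeasure (distr Pm borel (mu lam)) (sphere 0 1) = 1" .
    next
      fix z :: complex
      have eq: "emeasure (distr Pm borel (mu lam)) {z} = emeasure Pm (mu lam -` {z} \<inter> space Pm)"
        by (rule emeasure_distr[OF meas]) simp
      show "emeasure (distr Pm borel (mu lam)) {z} = 0"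
      proof (cases "mu lam -` {z} = {}")
        case True then show ?thesis by (simp add: eq)
      next
        case False
        then obtain a0 where a0: "mu lam a0 = z" by auto
        have sub: "mu lam -` {z} \<inter> space Pm \<subseteq> cyl J a0" for J
          using inj a0 by (auto simp: cyl_mem inj_eq)
        have pre: "mu lam -` {z} \<inter> space Pm \<in> sets Pm" by (rule measurable_sets[OF meas]) simp
        have le: "emeasure Pm (mu lam -` {z} \<inter> space Pm) \<le> ennreal ((1/2)^J)" for J
          using emeasure_mono[OF sub cyl_sets] cyl_measure by simp
        have "emeasure Pm (mu lam -` {z} \<inter> space Pm) \<le> 0"
        proof (rule ennreal_le_epsilon)
          fix e :: real assume e: "0 < e"
          obtain J where J: "(1/2::real)^J < e" using real_arch_pow_inv[OF e, of "1/2"] by auto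
          have "emeasure Pm (mu lam -` {z} \<inter> space Pm) \<le> ennreal ((1/2)^J)" by (rule le)
          also have "\<dots> \<le> ennreal e" by (rule ennreal_leI) (use J in simp)
          finally show "emeasure Pm (mu lam -` {z} \<inter> space Pm) \<le> 0 + ennreal e" by simp
        qed
        then show ?thesis by (simp add: eq)
      qed
    next
      fix B :: "complex set"
      assume B: "B \<in> sets borel" "B \<subseteq> sphere 0 1" "emeasure (distr Pm borel (mu lam)) B = 1"
      show "closed_span_ell2 (\<Union>l\<in>B. eigenspace_ell2 T l) = ell2"
        unfolding T_def by (rule span_main[OF u sl Kc B(1) B(3)])
    qed
  qed
qed


end
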